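(* Let $(\mathbf X_1,\mathbf Y_1)$ and $(\mathbf X_2,\mathbf Y_2)$ be general correlated sources, both uniformly integrable, and let $(\mathbf X,\mathbf Y)$ be their mixture $P_{X^nY^n}=\alpha_1P_{X_1^nY_1^n}+\alpha_2P_{X_2^nY_2^n}$ with constants $\alpha_1,\alpha_2>0$, $\alpha_1+\alpha_2=1$. Assume $\underline D(\mathbf X_1\Vert\mathbf X_2)>0$ and $\underline D(\mathbf X_2\Vert\mathbf X_1)>0$. Then \[\overline H_s(\mathbf X|\mathbf Y)=\lim_{\varepsilon\downarrow0}\limsup_{n\to\infty}\sum_{i=1,2}\frac{\alpha_i}{n}\overline H_s^\varepsilon(X_i^n|Y_i^n).\]
   Context: A general correlated source $\{(X^n,Y^n)\}_{n\ge1}$ is an arbitrary sequence of pairs of random variables on $\mathcal X^n\times\mathcal Y^n$, $\mathcal X,\mathcal Y$ finite or countably infinite (no structural assumptions; marginal probabilities positive). Logs base 2. A source is uniformly integrable if $Z_n=\frac1n\log\frac1{P_{X^n|Y^n}(X^n|Y^n)}$ satisfies $\lim_{u\to\infty}\sup_n\sum_{z:|z|\ge u}P_{Z_n}(z)|z|=0$. Spectral inf-divergence rate: $\underline D(\mathbf X_1\Vert\mathbf X_2)=\sup\{\beta:\lim_n\Pr\{\frac1n\log\frac{P_{X_1^n}(X_1^n)}{P_{X_2^n}(X_1^n)}<\beta\}=0\}$, where $X_1^n\sim P_{X_1^n}$ and $P_{X_i^n}$ are the $\mathcal X^n$-marginals. For a source with distributions $P_{X^nY^n}$, $x^n$ and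 $\varepsilon\in(0,1]$: $\overline h^\varepsilon(x^n|P_{X^nY^n})=\inf\{a\in\mathbb R:\sum_{y^n:\log(1/P_{X^n|Y^n}(x^n|y^n))>a}P_{Y^n|X^n}(y^n|x^n)\le\varepsilon\}$; $\overline H_s^\varepsilon(X^n|Y^n)=\sum_{x^n}P_{X^n}(x^n)\overline h^\varepsilon(x^n|P_{X^nY^n})$ (analogously for $(X_i^n,Y_i^n)$); $\overline H_s(\mathbf X|\mathbf Y)=\lim_{\varepsilon\downarrow0}\limsup_n\frac1n\overline H_s^\varepsilon(X^n|Y^n)$. *)

theory Defs
  imports "HOL-Probability.Probability" "HOL-Library.Liminf_Limsup"
begin

definition gen_source :: "(nat \<Rightarrow> ('a list \<times> 'b list) pmf) \<Rightarrow> bool" where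
  "gen_source P \<longleftrightarrow> (\<forall>n.
     set_pmf (P n) \<subseteq> {(x, y). length x = n \<and> length y = n} \<and>
     (\<forall>x. length x = n \<longrightarrow> pmf (map_pmf fst (P n)) x > 0) \<and>
     (\<forall>y. length y = n \<longrightarrow> pmf (map_pmf snd (P n)) y > 0))"

definition condXY :: "(nat \<Rightarrow> ('a list \<times> 'b list) pmf) \<Rightarrow> nat \<Rightarrow> 'a list \<Rightarrow> 'b list \<Rightarrow> real" where
  "condXY P n x y = pmf (P n) (x, y) / pmf (map_pmf snd (P n)) y"

definition condYX :: "(nat \<Rightarrow> ('a list \<times> 'b list) pmf) \<Rightarrow> nat \<Rightarrow> 'a list \<Rightarrow> 'b list \<Rightarrow> real" where
  "condYX P n x y = pmf (P n) (x, y) / pmf (map_pmf fst (P n)) x"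

definition Zrv :: "(nat \<Rightarrow> ('a list \<times> 'b list) pmf) \<Rightarrow> nat \<Rightarrow> 'a list \<times> 'b list \<Rightarrow> real" where
  "Zrv P n xy = (1 / real n) * log 2 (1 / condXY P n (fst xy) (snd xy))"

definition unif_integrable :: "(nat \<Rightarrow> ('a list \<times> 'b list) pmf) \<Rightarrow> bool" where
  "unif_integrable P \<longleftrightarrow>
     ((\<lambda>u::real. SUP n\<in>{1..}. \<integral>\<^sup>+ z. ennreal (\<bar>z\<bar> * indicator {z. \<bar>z\<bar> \<ge> u} z)
          \<partial>measure_pmf (map_pmf (Zrv P n) (P n))) \<longlongrightarrow> 0) at_top"

text \<open>Spectral inf-divergence rate of the X-marginals (extended real, so sup of an
  empty/unbounded set is handled correctly).\<close>

definition spec_inf_div :: "(nat \<Rightarrow> ('a list \<times> 'b list) pmf) \<Rightarrow> (nat \<Rightarrow> ('a list \<times> 'c list) pmf) \<Rightarrow> ereal" where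
  "spec_inf_div P1 P2 = Sup (ereal ` {\<beta>.
     (\<lambda>n. measure_pmf.prob (map_pmf fst (P1 n))
        {x. (1 / real n) * log 2 (pmf (map_pmf fst (P1 n)) x / pmf (map_pmf fst (P2 n)) x) < \<beta>})
     \<longlonglongrightarrow> 0})"

definition h_up :: "(nat \<Rightarrow> ('a list \<times> 'b list) pmf) \<Rightarrow> nat \<Rightarrow> real \<Rightarrow> 'a list \<Rightarrow> real" where
  "h_up P n \<epsilon> x = Inf {a::real.
     infsum (\<lambda>y. condYX P n x y) {y. log 2 (1 / condXY P n x y) > a} \<le> \<epsilon>}"

definition H_s_eps :: "(nat \<Rightarrow> ('a list \<times> 'b list) pmf) \<Rightarrow> nat \<Rightarrow> real \<Rightarrow> ennreal" where
  "H_s_eps P n \<epsilon> = (\<integral>\<^sup>+ x. ennreal (h_up P n \<epsilon> x) \<partial>measure_pmf (map_pmf fst (P n)))"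

definition H_s :: "(nat \<Rightarrow> ('a list \<times> 'b list) pmf) \<Rightarrow> ennreal" where
  "H_s P = Lim (at_right 0) (\<lambda>\<epsilon>. limsup (\<lambda>n. ennreal (1 / real n) * H_s_eps P n \<epsilon>))"

end

theory Submission imports Defs begin

lemma pair_sum:
  fixes f :: "'a::countable \<times> 'b::countable \<Rightarrow> ennreal"
  shows "(\<integral>\<^sup>+ z. f z \<partial>count_space UNIV) = (\<integral>\<^sup>+ x. \<integral>\<^sup>+ y. f (x,y) \<partial>count_space UNIV \<partial>count_space UNIV)"
proof -
  interpret A: sigma_finite_measure "count_space (UNIV::'a set)" by (rule sigma_finite_measure_count_space)
  interpret B: sigma_finite_measure "count_space (UNIV::'b set)" by (rule sigma_finite_measure_count_space)
  have "(\<integral>\<^sup>+ z. f z \<partial>count_space UNIV) = (\<integral>\<^sup>+ z. f z \<partial>(count_space UNIV \<Otimes>\<^sub>M count_space UNIV))"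
    by (rule nn_integral_count_space_prod_eq[symmetric])
  also have "\<dots> = (\<integral>\<^sup>+ x. \<integral>\<^sup>+ y. f (x,y) \<partial>count_space UNIV \<partial>count_space UNIV)"
    by (rule B.nn_integral_fst[symmetric]) (simp add: pair_measure_countable)
  finally show ?thesis .
qed

lemma pair_sum_swap:
  fixes f :: "'a::countable \<Rightarrow> 'b::countable \<Rightarrow> ennreal"
  shows "(\<integral>\<^sup>+ x. \<integral>\<^sup>+ y. f x y \<partial>count_space UNIV \<partial>count_space UNIV) = (\<integral>\<^sup>+ y. \<integral>\<^sup>+ x. f x y \<partial>count_space UNIV \<partial>count_space UNIV)"
  by (rule nn_integral_count_space_nn_integral[symmetric]) auto

lemma sum_single: "(\<integral>\<^sup>+x. indicator {a} x * f x \<partial>count_space UNIV) = (f a :: ennreal)"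
proof -
  have "(\<integral>\<^sup>+x. indicator {a} x * f x \<partial>count_space UNIV) = (\<integral>\<^sup>+x. f x * indicator {a} x \<partial>count_space UNIV)"
    by (simp add: mult.commute)
  also have "\<dots> = f a" by (subst nn_integral_indicator_singleton) auto
  finally show ?thesis .
qed

lemma pmf_sum: "(\<integral>\<^sup>+ z. ennreal (pmf (p::('a::countable) pmf) z) \<partial>count_space UNIV) = 1"
  by (simp add: nn_integral_pmf)

lemma fst_marg:
  fixes p :: "('a::countable \<times> 'b::countable) pmf"
  shows "ennreal (pmf (map_pmf fst p) x) = (\<integral>\<^sup>+ y. ennreal (pmf p (x,y)) \<partial>count_space UNIV)"
proof -
  have "ennreal (pmf (map_pmf fst p) x) = (\<integral>\<^sup>+ z. ennreal (pmf p z) * indicator (fst -` {x}) z \<partial>count_space UNIV)"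
    by (simp add: ennreal_pmf_map nn_integral_measure_pmf)
  also have "\<dots> = (\<integral>\<^sup>+ x'. \<integral>\<^sup>+ y. ennreal (pmf p (x',y)) * indicator (fst -` {x}) (x',y) \<partial>count_space UNIV \<partial>count_space UNIV)"
    by (rule pair_sum)
  also have "\<dots> = (\<integral>\<^sup>+ x'. indicator {x} x' * (\<integral>\<^sup>+ y. ennreal (pmf p (x',y)) \<partial>count_space UNIV) \<partial>count_space UNIV)"
    by (intro nn_integral_cong) (auto split: split_indicator)
  also have "\<dots> = (\<integral>\<^sup>+ y. ennreal (pmf p (x,y)) \<partial>count_space UNIV)"
    by (simp add: sum_single)
  finally show ?thesis .
qed

lemma snd_marg:
  fixes p :: "('a::countable \<times> 'b::countable) pmf"
  shows "ennreal (pmf (map_pmf snd p) y) = (\<integral>\<^sup>+ x. ennreal (pmf p (x,y)) \<partial>count_space UNIV)"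
proof -
  have "ennreal (pmf (map_pmf snd p) y) = (\<integral>\<^sup>+ z. ennreal (pmf p z) * indicator (snd -` {y}) z \<partial>count_space UNIV)"
    by (simp add: ennreal_pmf_map nn_integral_measure_pmf)
  also have "\<dots> = (\<integral>\<^sup>+ x. \<integral>\<^sup>+ y'. ennreal (pmf p (x,y')) * indicator (snd -` {y}) (x,y') \<partial>count_space UNIV \<partial>count_space UNIV)"
    by (rule pair_sum)
  also have "\<dots> = (\<integral>\<^sup>+ x. \<integral>\<^sup>+ y'. indicator {y} y' * ennreal (pmf p (x,y')) \<partial>count_space UNIV \<partial>count_space UNIV)"
    by (intro nn_integral_cong) (auto split: split_indicator)
  also have "\<dots> = (\<integral>\<^sup>+ x. ennreal (pmf p (x,y)) \<partial>count_space UNIV)"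
  proof -
    have "(\<integral>\<^sup>+ x. \<integral>\<^sup>+ y'. indicator {y} y' * ennreal (pmf p (x,y')) \<partial>count_space UNIV \<partial>count_space UNIV) = (\<integral>\<^sup>+ x. ennreal (pmf p (x,y)) \<partial>count_space UNIV)"
      by (subst sum_single) simp
    then show ?thesis .
  qed
  finally show ?thesis .
qed

lemma pmf_le_fst: "pmf p (x,y) \<le> pmf (map_pmf fst p) x"
  by (simp add: pmf_map measure_pmf_single[symmetric] measure_pmf.finite_measure_mono)

lemma pmf_le_snd: "pmf p (x,y) \<le> pmf (map_pmf snd p) y"
  by (simp add: pmf_map measure_pmf_single[symmetric] measure_pmf.finite_measure_mono)


definition tm :: "('b \<Rightarrow> real) \<Rightarrow> ('b \<Rightarrow> real) \<Rightarrow> real \<Rightarrow> ennreal" where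
  "tm w s a = (\<integral>\<^sup>+ y. ennreal (w y) * indicator {y. a < s y} y \<partial>count_space UNIV)"

definition qt :: "('b \<Rightarrow> real) \<Rightarrow> ('b \<Rightarrow> real) \<Rightarrow> real \<Rightarrow> real \<Rightarrow> real" where
  "qt w s m \<epsilon> = Inf {a. tm w s a \<le> ennreal (\<epsilon> * m)}"

lemma tm_anti: "a \<le> b \<Longrightarrow> tm w s b \<le> tm w s a"
  unfolding tm_def by (intro nn_integral_mono) (auto split: split_indicator)

lemma tm_neg:
  assumes "\<And>y. 0 \<le> s y" "(\<integral>\<^sup>+ y. ennreal (w y) \<partial>count_space UNIV) = ennreal m" "a < 0"
  shows "tm w s a = ennreal m"
proof -
  have "tm w s a = (\<integral>\<^sup>+ y. ennreal (w y) \<partial>count_space UNIV)"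
    unfolding tm_def using assms(1,3) by (intro nn_integral_cong) (auto split: split_indicator intro: less_le_trans)
  then show ?thesis using assms(2) by simp
qed

lemma tm_le:
  assumes "(\<integral>\<^sup>+ y. ennreal (w y) \<partial>count_space UNIV) = ennreal m"
  shows "tm w s a \<le> ennreal m"
proof -
  have "tm w s a \<le> (\<integral>\<^sup>+ y. ennreal (w y) \<partial>count_space UNIV)"
    unfolding tm_def by (intro nn_integral_mono) (auto split: split_indicator)
  then show ?thesis using assms by simp
qed

lemma tm_exists:
  assumes "(\<integral>\<^sup>+ y. ennreal (w y) \<partial>count_space UNIV) = ennreal m" "0 < m" "0 < \<epsilon>"
  shows "\<exists>a. tm w s a \<le> ennreal (\<epsilon> * m)"
proof -
  define f where "f = (\<lambda>(k::nat) y. ennreal (w y) * indicator {y. real k < s y} y)"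
  have dec: "decseq f"
    unfolding f_def by (rule decseq_SucI) (auto simp: le_fun_def split: split_indicator)
  have fin: "(\<integral>\<^sup>+ y. f i y \<partial>count_space UNIV) < \<infinity>" for i
  proof -
    have "(\<integral>\<^sup>+ y. f i y \<partial>count_space UNIV) = tm w s (real i)" unfolding f_def tm_def by simp
    also have "\<dots> \<le> ennreal m" by (rule tm_le[OF assms(1)])
    finally show ?thesis using le_less_trans by fastforce
  qed
  have inf0: "(INF i. f i y) = 0" for y
  proof -
    obtain k :: nat where "s y < real k" using reals_Archimedean2 by blast
    then have "f k y = 0" unfolding f_def by auto
    then show ?thesis by (metis (no_types, lifting) INF_lower UNIV_I antisym_conv1 not_less_zero zero_less_iff_neq_zero order_less_le_trans)
  qed
  have "(INF i. (\<integral>\<^sup>+ y. f i y \<partial>count_space UNIV)) = (\<integral>\<^sup>+ y. (INF i. f i y) \<partial>count_space UNIV)"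
    by (rule nn_integral_monotone_convergence_INF_decseq[symmetric]) (use dec fin in auto)
  also have "\<dots> = 0" by (simp add: inf0)
  finally have "(INF i. (\<integral>\<^sup>+ y. f i y \<partial>count_space UNIV)) < ennreal (\<epsilon> * m)"
    using assms by simp
  then obtain i where "(\<integral>\<^sup>+ y. f i y \<partial>count_space UNIV) < ennreal (\<epsilon> * m)"
    by (auto simp: INF_less_iff)
  then have "tm w s (real i) \<le> ennreal (\<epsilon> * m)" unfolding f_def tm_def by simp
  then show ?thesis by blast
qed

lemma qt_set_ge0:
  assumes "\<And>y. 0 \<le> s y" "(\<integral>\<^sup>+ y. ennreal (w y) \<partial>count_space UNIV) = ennreal m" "0 < m" "\<epsilon> < 1"
    and "tm w s a \<le> ennreal (\<epsilon> * m)"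
  shows "0 \<le> a"
proof (rule ccontr)
  assume "\<not> 0 \<le> a"
  then have "tm w s a = ennreal m" using tm_neg[OF assms(1,2)] by simp
  moreover have "ennreal (\<epsilon> * m) < ennreal m" using assms(3,4)
    by (intro ennreal_lessI) (auto simp: mult_less_cancel_right2)
  ultimately show False using assms(5) by simp
qed

lemma qt_bdd:
  assumes "\<And>y. 0 \<le> s y" "(\<integral>\<^sup>+ y. ennreal (w y) \<partial>count_space UNIV) = ennreal m" "0 < m" "\<epsilon> < 1"
  shows "bdd_below {a. tm w s a \<le> ennreal (\<epsilon> * m)}"
  using qt_set_ge0[OF assms] by (intro bdd_belowI[of _ 0]) auto

lemma qt_le:
  assumes "\<And>y. 0 \<le> s y" "(\<integral>\<^sup>+ y. ennreal (w y) \<partial>count_space UNIV) = ennreal m" "0 < m" "\<epsilon> < 1"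
    and "tm w s a \<le> ennreal (\<epsilon> * m)"
  shows "qt w s m \<epsilon> \<le> a"
  unfolding qt_def using assms(5) by (intro cInf_lower qt_bdd[OF assms(1-4)]) auto

lemma qt_ge0:
  assumes "\<And>y. 0 \<le> s y" "(\<integral>\<^sup>+ y. ennreal (w y) \<partial>count_space UNIV) = ennreal m" "0 < m" "0 < \<epsilon>" "\<epsilon> < 1"
  shows "0 \<le> qt w s m \<epsilon>"
  unfolding qt_def using tm_exists[OF assms(2,3,4)] qt_set_ge0[OF assms(1,2,3,5)]
  by (intro cInf_greatest) auto

lemma qt_tail:
  assumes "\<And>y. 0 \<le> s y" "(\<integral>\<^sup>+ y. ennreal (w y) \<partial>count_space UNIV) = ennreal m" "0 < m" "0 < \<epsilon>" "\<epsilon> < 1" "0 < \<delta>"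
  shows "tm w s (qt w s m \<epsilon> + \<delta>) \<le> ennreal (\<epsilon> * m)"
proof -
  have "qt w s m \<epsilon> < qt w s m \<epsilon> + \<delta>" using assms by simp
  then obtain b where b: "tm w s b \<le> ennreal (\<epsilon> * m)" "b < qt w s m \<epsilon> + \<delta>"
    unfolding qt_def using tm_exists[OF assms(2,3,4)] qt_bdd[OF assms(1,2,3,5)]
    by (subst (asm) cInf_less_iff) auto
  have "tm w s (qt w s m \<epsilon> + \<delta>) \<le> tm w s b" using b(2) by (intro tm_anti) simp
  then show ?thesis using b(1) by simp
qed

lemma qt_mono:
  assumes "\<And>y. 0 \<le> s y" "(\<integral>\<^sup>+ y. ennreal (w y) \<partial>count_space UNIV) = ennreal m" "0 < m" "0 < \<epsilon>" "\<epsilon> \<le> \<epsilon>'" "\<epsilon>' < 1"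
  shows "qt w s m \<epsilon>' \<le> qt w s m \<epsilon>"
  unfolding qt_def
proof (rule cInf_superset_mono)
  show "{a. tm w s a \<le> ennreal (\<epsilon> * m)} \<noteq> {}" using tm_exists[OF assms(2,3,4)] by auto
  show "bdd_below {a. tm w s a \<le> ennreal (\<epsilon>' * m)}" by (rule qt_bdd[OF assms(1,2,3,6)])
  show "{a. tm w s a \<le> ennreal (\<epsilon> * m)} \<subseteq> {a. tm w s a \<le> ennreal (\<epsilon>' * m)}"
  proof safe
    fix a assume "tm w s a \<le> ennreal (\<epsilon> * m)"
    moreover have "ennreal (\<epsilon> * m) \<le> ennreal (\<epsilon>' * m)" using assms(3,5) by (intro ennreal_leI mult_right_mono) auto
    ultimately show "tm w s a \<le> ennreal (\<epsilon>' * m)" by (rule order_trans)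
  qed
qed

lemma qt_markov:
  assumes "\<And>y. 0 \<le> s y" "(\<integral>\<^sup>+ y. ennreal (w y) \<partial>count_space UNIV) = ennreal m" "0 < m" "0 < \<epsilon>" "\<epsilon> < 1"
    and "\<And>y. 0 \<le> w y"
  shows "ennreal (qt w s m \<epsilon>) \<le> (\<integral>\<^sup>+ y. ennreal (w y * s y) \<partial>count_space UNIV) / ennreal (\<epsilon> * m) + 1"
proof (cases "(\<integral>\<^sup>+ y. ennreal (w y * s y) \<partial>count_space UNIV) = \<top>")
  case True
  have "ennreal (\<epsilon> * m) \<noteq> \<top>" by simp
  then show ?thesis using True by (simp add: ennreal_top_divide)
next
  case False
  have "\<exists>M. (\<integral>\<^sup>+ y. ennreal (w y * s y) \<partial>count_space UNIV) = ennreal M \<and> 0 \<le> M"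
    using False by (cases "(\<integral>\<^sup>+ y. ennreal (w y * s y) \<partial>count_space UNIV)" rule: ennreal_cases) auto
  then obtain M where M: "(\<integral>\<^sup>+ y. ennreal (w y * s y) \<partial>count_space UNIV) = ennreal M" "0 \<le> M" by blast
  define a where "a = M / (\<epsilon> * m) + 1"
  have em: "0 < \<epsilon> * m" using assms by simp
  have a0: "0 < a" unfolding a_def using M em by (simp add: add_nonneg_pos)
  have "tm w s a \<noteq> \<top>" using tm_le[OF assms(2), of s a] by (auto simp: top_unique)
  then have "\<exists>t. tm w s a = ennreal t \<and> 0 \<le> t" by (cases "tm w s a" rule: ennreal_cases) auto
  then obtain t where t: "tm w s a = ennreal t" "0 \<le> t" by blast
  have "ennreal a * tm w s a = (\<integral>\<^sup>+ y. ennreal a * (ennreal (w y) * indicator {y. a < s y} y) \<partial>count_space UNIV)"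
    unfolding tm_def by (simp add: nn_integral_cmult)
  also have "\<dots> \<le> (\<integral>\<^sup>+ y. ennreal (w y * s y) \<partial>count_space UNIV)"
  proof (intro nn_integral_mono)
    fix y
    show "ennreal a * (ennreal (w y) * indicator {y. a < s y} y) \<le> ennreal (w y * s y)"
    proof (cases "a < s y")
      case True
      then have "a * w y \<le> s y * w y" using assms(6)[of y] by (intro mult_right_mono) auto
      then have "a * w y \<le> w y * s y" by (simp add: mult.commute)
      then show ?thesis using True a0 assms(6)[of y] by (simp add: ennreal_mult[symmetric])
    qed simp
  qed
  finally have "ennreal (a * t) \<le> ennreal M" using t a0 M by (simp add: ennreal_mult)
  then have at: "a * t \<le> M" using M(2) by simp
  have "t \<le> \<epsilon> * m"
  proof (rule ccontr)
    assume "\<not> t \<le> \<epsilon> * m"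
    then have "a * (\<epsilon> * m) < a * t" using a0 by simp
    moreover have "a * (\<epsilon> * m) = M + \<epsilon> * m" unfolding a_def using em assms(3,4) by (simp add: field_simps)
    ultimately show False using at em by simp
  qed
  then have "tm w s a \<le> ennreal (\<epsilon> * m)" using t by simp
  then have "qt w s m \<epsilon> \<le> a" by (rule qt_le[OF assms(1,2,3,5)])
  then have "ennreal (qt w s m \<epsilon>) \<le> ennreal a" by (rule ennreal_leI)
  also have "\<dots> = ennreal M / ennreal (\<epsilon> * m) + 1"
  proof -
    have "0 \<le> M / (\<epsilon> * m)" using M(2) em by simp
    then show ?thesis unfolding a_def using M(2) em by (simp add: divide_ennreal)
  qed
  finally show ?thesis using M by simp
qed


lemma up_abs:
  assumes s0: "\<And>y. 0 \<le> s y" and t0: "\<And>y. 0 \<le> t y"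
    and w0: "\<And>y. 0 \<le> w y" and v0: "\<And>y. 0 \<le> v y" and u0: "\<And>y. 0 \<le> u y"
    and sm: "(\<integral>\<^sup>+ y. ennreal (w y) \<partial>count_space UNIV) = ennreal m"
    and smv: "(\<integral>\<^sup>+ y. ennreal (v y) \<partial>count_space UNIV) = ennreal mv"
    and smu: "(\<integral>\<^sup>+ y. ennreal (u y) \<partial>count_space UNIV) = ennreal mu" and mu0: "0 \<le> mu"
    and m: "0 < m" and mv: "0 < mv" and e: "0 < \<epsilon>" "\<epsilon> < 1"
    and al0: "0 < al" and be0: "0 \<le> be"
    and wmix: "\<And>y. w y = al * v y + be * u y" and mmix: "m = al * mv + be * mu"
    and sK: "\<And>y. 0 < v y \<Longrightarrow> y \<notin> B \<Longrightarrow> s y \<le> t y + K"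
    and small2: "be * mu \<le> \<epsilon> / 3 * m"
    and smallB: "(\<integral>\<^sup>+ y. ennreal (v y) * indicator B y \<partial>count_space UNIV) \<le> ennreal (\<epsilon> / 3 * mv)"
  shows "qt w s m \<epsilon> \<le> qt v t mv (\<epsilon> / 3) + 1 + K"
proof -
  define a where "a = qt v t mv (\<epsilon> / 3) + 1"
  have ta: "tm v t a \<le> ennreal (\<epsilon> / 3 * mv)"
    unfolding a_def by (rule qt_tail[OF t0 smv mv]) (use e in auto)
  have pw: "ennreal (w y) * indicator {y. a + K < s y} y \<le>
      ennreal al * (ennreal (v y) * indicator {y. a < t y} y + ennreal (v y) * indicator B y) + ennreal be * ennreal (u y)" for y
  proof -
    have wy: "ennreal (w y) = ennreal al * ennreal (v y) + ennreal be * ennreal (u y)"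
      using wmix[of y] al0 be0 v0[of y] u0[of y] by (simp add: ennreal_mult[symmetric] ennreal_plus[symmetric] del: ennreal_plus)
    show ?thesis
    proof (cases "a + K < s y")
      case False then show ?thesis by simp
    next
      case True
      show ?thesis
      proof (cases "v y = 0")
        case True then show ?thesis using wy by (simp split: split_indicator)
      next
        case False
        then have pos: "0 < v y" using v0[of y] by simp
        show ?thesis
        proof (cases "y \<in> B")
          case True
          have "ennreal (v y) \<le> ennreal (v y) * indicator {y. a < t y} y + ennreal (v y) * indicator B y"
            using True by (simp add: add_increasing)
          then have "ennreal (w y) \<le> ennreal al * (ennreal (v y) * indicator {y. a < t y} y + ennreal (v y) * indicator B y) + ennreal be * ennreal (u y)"
            unfolding wy by (intro add_mono mult_left_mono) auto
          then show ?thesis using \<open>a + K < s y\<close> by simp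
        next
          case False
          then have "a < t y" using sK[OF pos False] \<open>a + K < s y\<close> by simp
          then show ?thesis using wy \<open>a + K < s y\<close> False by simp
        qed
      qed
    qed
  qed
  have "tm w s (a + K) \<le> (\<integral>\<^sup>+ y. ennreal al * (ennreal (v y) * indicator {y. a < t y} y + ennreal (v y) * indicator B y) + ennreal be * ennreal (u y) \<partial>count_space UNIV)"
    unfolding tm_def by (intro nn_integral_mono pw)
  also have "\<dots> = ennreal al * (tm v t a + (\<integral>\<^sup>+ y. ennreal (v y) * indicator B y \<partial>count_space UNIV)) + ennreal be * ennreal mu"
    unfolding tm_def smu[symmetric] by (simp add: nn_integral_add nn_integral_cmult)
  also have "\<dots> \<le> ennreal al * (ennreal (\<epsilon> / 3 * mv) + ennreal (\<epsilon> / 3 * mv)) + ennreal be * ennreal mu"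
    by (intro add_mono mult_left_mono ta smallB) auto
  also have "\<dots> = ennreal (al * (\<epsilon> / 3 * mv + \<epsilon> / 3 * mv) + be * mu)"
  proof -
    have n1: "0 \<le> \<epsilon> / 3 * mv" using e mv by simp
    have "ennreal (al * (\<epsilon> / 3 * mv + \<epsilon> / 3 * mv) + be * mu) = ennreal (al * (\<epsilon> / 3 * mv + \<epsilon> / 3 * mv)) + ennreal (be * mu)"
      using al0 be0 n1 mu0 by (intro ennreal_plus) auto
    also have "ennreal (al * (\<epsilon> / 3 * mv + \<epsilon> / 3 * mv)) = ennreal al * (ennreal (\<epsilon> / 3 * mv) + ennreal (\<epsilon> / 3 * mv))"
      using al0 n1 by (simp only: ennreal_mult[symmetric] ennreal_plus[symmetric] add_nonneg_nonneg less_imp_le)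
    also have "ennreal (be * mu) = ennreal be * ennreal mu" using be0 mu0 by (simp add: ennreal_mult)
    finally show ?thesis by simp
  qed
  also have "\<dots> \<le> ennreal (\<epsilon> * m)"
  proof (intro ennreal_leI)
    have "al * mv \<le> m" using mmix be0 mu0 by simp
    then have h: "2 * \<epsilon> / 3 * (al * mv) \<le> 2 * \<epsilon> / 3 * m" using e by (intro mult_left_mono) auto
    have eq: "al * (\<epsilon> / 3 * mv + \<epsilon> / 3 * mv) = 2 * \<epsilon> / 3 * (al * mv)" by (simp add: algebra_simps)
    have "al * (\<epsilon> / 3 * mv + \<epsilon> / 3 * mv) \<le> 2 * \<epsilon> / 3 * m" using h eq by simp
    then show "al * (\<epsilon> / 3 * mv + \<epsilon> / 3 * mv) + be * mu \<le> \<epsilon> * m" using small2 by linarith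
  qed
  finally have "tm w s (a + K) \<le> ennreal (\<epsilon> * m)" .
  then have "qt w s m \<epsilon> \<le> a + K" by (rule qt_le[OF s0 sm m e(2)])
  then show ?thesis unfolding a_def by simp
qed


lemma lo_abs:
  assumes s0: "\<And>y. 0 \<le> s y" and t0: "\<And>y. 0 \<le> t y"
    and w0: "\<And>y. 0 \<le> w y" and v0: "\<And>y. 0 \<le> v y"
    and sm: "(\<integral>\<^sup>+ y. ennreal (w y) \<partial>count_space UNIV) = ennreal m"
    and smv: "(\<integral>\<^sup>+ y. ennreal (v y) \<partial>count_space UNIV) = ennreal mv"
    and m: "0 < m" and mv: "0 < mv" and e: "0 < \<epsilon>" "\<epsilon> < 1"
    and al0: "0 < al"
    and wdom: "\<And>y. al * v y \<le> w y" and mle: "m \<le> 2 * al * mv"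
    and sK: "\<And>y. 0 < v y \<Longrightarrow> y \<notin> B \<Longrightarrow> t y \<le> s y + K"
    and smallB: "(\<integral>\<^sup>+ y. ennreal (v y) * indicator B y \<partial>count_space UNIV) \<le> ennreal (\<epsilon> / 3 * mv)"
  shows "qt v t mv \<epsilon> \<le> qt w s m (\<epsilon> / 3) + 1 + K"
proof -
  define a where "a = qt w s m (\<epsilon> / 3) + 1"
  have ta: "tm w s a \<le> ennreal (\<epsilon> / 3 * m)"
    unfolding a_def by (rule qt_tail[OF s0 sm m]) (use e in auto)
  have pw: "ennreal al * (ennreal (v y) * indicator {y. a + K < t y} y) \<le>
      ennreal (w y) * indicator {y. a < s y} y + ennreal al * (ennreal (v y) * indicator B y)" for y
  proof (cases "a + K < t y \<and> 0 < v y")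
    case False
    then have "ennreal (v y) * indicator {y. a + K < t y} y = 0" using v0[of y]
      by (cases "a + K < t y") (auto simp: indicator_def)
    then show ?thesis by (metis mult_zero_right zero_le)
  next
    case True
    show ?thesis
    proof (cases "y \<in> B")
      case True then show ?thesis using \<open>a + K < t y \<and> 0 < v y\<close> by (simp add: add_increasing)
    next
      case False
      then have "a < s y" using sK[of y] True by simp
      moreover have "ennreal al * ennreal (v y) \<le> ennreal (w y)"
        using wdom[of y] al0 v0[of y] by (simp add: ennreal_mult[symmetric] ennreal_leI)
      ultimately show ?thesis using True by (simp add: add_increasing2)
    qed
  qed
  have "ennreal al * tm v t (a + K) = (\<integral>\<^sup>+ y. ennreal al * (ennreal (v y) * indicator {y. a + K < t y} y) \<partial>count_space UNIV)"
    unfolding tm_def by (simp add: nn_integral_cmult)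
  also have "\<dots> \<le> (\<integral>\<^sup>+ y. ennreal (w y) * indicator {y. a < s y} y + ennreal al * (ennreal (v y) * indicator B y) \<partial>count_space UNIV)"
    by (intro nn_integral_mono pw)
  also have "\<dots> = tm w s a + ennreal al * (\<integral>\<^sup>+ y. ennreal (v y) * indicator B y \<partial>count_space UNIV)"
    unfolding tm_def by (simp add: nn_integral_add nn_integral_cmult)
  also have "\<dots> \<le> ennreal (\<epsilon> / 3 * m) + ennreal al * ennreal (\<epsilon> / 3 * mv)"
    by (intro add_mono mult_left_mono ta smallB) auto
  also have "\<dots> = ennreal (\<epsilon> / 3 * m + al * (\<epsilon> / 3 * mv))"
  proof -
    have "ennreal (al * (\<epsilon> / 3 * mv)) = ennreal al * ennreal (\<epsilon> / 3 * mv)" by (rule ennreal_mult') (use al0 in simp)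
    moreover have "ennreal (\<epsilon> / 3 * m + al * (\<epsilon> / 3 * mv)) = ennreal (\<epsilon> / 3 * m) + ennreal (al * (\<epsilon> / 3 * mv))"
      by (rule ennreal_plus) (use al0 e m mv in auto)
    ultimately show ?thesis by simp
  qed
  also have "\<dots> \<le> ennreal (al * (\<epsilon> * mv))"
  proof (intro ennreal_leI)
    have "\<epsilon> / 3 * m \<le> \<epsilon> / 3 * (2 * al * mv)" using mle e by (intro mult_left_mono) auto
    then show "\<epsilon> / 3 * m + al * (\<epsilon> / 3 * mv) \<le> al * (\<epsilon> * mv)" by (simp add: algebra_simps)
  qed
  also have "\<dots> = ennreal al * ennreal (\<epsilon> * mv)" by (rule ennreal_mult') (use al0 in simp)
  finally have "ennreal al * tm v t (a + K) \<le> ennreal al * ennreal (\<epsilon> * mv)" .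
  then have "tm v t (a + K) \<le> ennreal (\<epsilon> * mv)" using al0
    by (simp add: ennreal_mult_le_mult_iff)
  then have "qt v t mv \<epsilon> \<le> a + K" by (rule qt_le[OF t0 smv mv e(2)])
  then show ?thesis unfolding a_def by simp
qed

lemma massB:
  assumes w0: "\<And>y. 0 \<le> w y" and v0: "\<And>y. 0 \<le> v y"
    and sm: "(\<integral>\<^sup>+ y. ennreal (w y) \<partial>count_space UNIV) = ennreal m" and m: "0 < m" and mv: "0 \<le> mv"
  shows "(\<integral>\<^sup>+ y. ennreal (v y) * indicator {y. v y * m * 2 powr c < w y * mv} y \<partial>count_space UNIV) \<le> ennreal (2 powr (-c) * mv)"
proof -
  have "(\<integral>\<^sup>+ y. ennreal (v y) * indicator {y. v y * m * 2 powr c < w y * mv} y \<partial>count_space UNIV)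
      \<le> (\<integral>\<^sup>+ y. ennreal (2 powr (-c) * mv / m) * ennreal (w y) \<partial>count_space UNIV)"
  proof (intro nn_integral_mono)
    fix y
    show "ennreal (v y) * indicator {y. v y * m * 2 powr c < w y * mv} y \<le> ennreal (2 powr (- c) * mv / m) * ennreal (w y)"
    proof (cases "v y * m * 2 powr c < w y * mv")
      case True
      have "v y \<le> 2 powr (- c) * mv / m * w y"
      proof -
        have "v y * m * 2 powr c \<le> w y * mv" using True by simp
        then have "v y \<le> w y * mv / (m * 2 powr c)" using m by (simp add: field_simps)
        also have "\<dots> = 2 powr (- c) * mv / m * w y" by (simp add: powr_minus field_simps)
        finally show ?thesis .
      qed
      then show ?thesis using True m mv w0[of y] by (simp add: ennreal_mult[symmetric])
    qed simp
  qed
  also have "\<dots> = ennreal (2 powr (-c) * mv / m) * ennreal m" by (simp add: nn_integral_cmult sm)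
  also have "\<dots> = ennreal (2 powr (-c) * mv)" using m mv by (simp add: ennreal_mult[symmetric])
  finally show ?thesis .
qed

abbreviation "mX P n x \<equiv> pmf (map_pmf fst (P n)) x"
abbreviation "mY P n y \<equiv> pmf (map_pmf snd (P n)) y"
abbreviation "sc P n x y \<equiv> log 2 (1 / condXY P n x y)"

lemma gs_len:
  assumes "gen_source P" "pmf (P n) (x,y) \<noteq> 0"
  shows "length x = n" "length y = n"
proof -
  have "(x,y) \<in> set_pmf (P n)" using assms(2) by (simp add: set_pmf_iff)
  then show "length x = n" "length y = n" using assms(1) unfolding gen_source_def by auto
qed

lemma gs_mX_pos: "gen_source P \<Longrightarrow> length x = n \<Longrightarrow> 0 < mX P n x"
  unfolding gen_source_def by auto

lemma gs_mY_pos: "gen_source P \<Longrightarrow> length y = n \<Longrightarrow> 0 < mY P n y"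
  unfolding gen_source_def by auto

lemma gs_mX_zero:
  assumes "gen_source P" "length x \<noteq> n" shows "mX P n x = 0"
proof (rule ccontr)
  assume "mX P n x \<noteq> 0"
  then have "x \<in> set_pmf (map_pmf fst (P n))" by (metis set_pmf_iff)
  then obtain y where "(x,y) \<in> set_pmf (P n)" by auto
  then show False using assms gs_len[of P n x y] by (simp add: set_pmf_iff)
qed

lemma condXY_bounds: "0 \<le> condXY P n x y" "condXY P n x y \<le> 1"
  unfolding condXY_def using pmf_le_snd[of "P n" x y]
  by (auto simp: divide_le_eq_1)

lemma sc_nonneg: "0 \<le> sc P n x y"
proof (cases "condXY P n x y = 0")
  case True then show ?thesis by (simp add: log_def)
next
  case False
  then have "0 < condXY P n x y" using condXY_bounds[of P n x y] by simp
  moreover have "1 \<le> 1 / condXY P n x y" using condXY_bounds(2)[of P n x y] \<open>0 < condXY P n x y\<close> by (simp add: field_simps)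
  ultimately show ?thesis by (subst zero_le_log_cancel_iff) auto
qed

lemma sc_eq:
  assumes "0 < pmf (P n) (x,y)"
  shows "sc P n x y = log 2 (mY P n y) - log 2 (pmf (P n) (x,y))"
proof -
  have "0 < mY P n y" using assms pmf_le_snd[of "P n" x y] by simp
  then show ?thesis unfolding condXY_def using assms by (simp add: log_divide)
qed

lemma infsum_ennreal:
  fixes f :: "'b \<Rightarrow> real"
  assumes "\<And>y. 0 \<le> f y" "(\<integral>\<^sup>+ y. ennreal (f y) \<partial>count_space UNIV) < \<infinity>"
  shows "ennreal (infsum f S) = (\<integral>\<^sup>+ y. ennreal (f y) * indicator S y \<partial>count_space UNIV)"
proof -
  have le: "(\<integral>\<^sup>+ y. ennreal (f y) \<partial>count_space S) \<le> (\<integral>\<^sup>+ y. ennreal (f y) \<partial>count_space UNIV)"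
    by (subst nn_integral_count_space_indicator) (auto intro!: nn_integral_mono split: split_indicator)
  have int: "integrable (count_space S) f"
    by (rule integrableI_bounded) (use assms le in auto)
  then have "ennreal (infsum f S) = ennreal (infsetsum f S)"
    by (simp add: infsetsum_infsum Infinite_Set_Sum.abs_summable_on_def)
  also have "\<dots> = (\<integral>\<^sup>+ y. ennreal (f y) \<partial>count_space S)"
    using int assms(1) by (simp add: nn_integral_conv_infsetsum Infinite_Set_Sum.abs_summable_on_def)
  also have "\<dots> = (\<integral>\<^sup>+ y. ennreal (f y) * indicator S y \<partial>count_space UNIV)"
    by (rule nn_integral_count_space_indicator) simp
  finally show ?thesis .
qed

lemma scale_iff:
  assumes "0 < (c::real)" "0 \<le> e"
  shows "ennreal (1 / c) * T \<le> ennreal e \<longleftrightarrow> T \<le> ennreal (e * c)"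
proof -
  have "ennreal (1 / c) * T \<le> ennreal e \<longleftrightarrow> ennreal c * (ennreal (1 / c) * T) \<le> ennreal c * ennreal e"
    using assms by (simp add: ennreal_mult_le_mult_iff)
  also have "ennreal c * (ennreal (1 / c) * T) = T"
    using assms by (simp add: mult.assoc[symmetric] ennreal_mult[symmetric])
  also have "ennreal c * ennreal e = ennreal (e * c)" using assms by (simp add: ennreal_mult mult.commute)
  finally show ?thesis .
qed

lemma h_up_eq:
  fixes P :: "nat \<Rightarrow> ('a::countable list \<times> 'b::countable list) pmf"
  assumes "0 < mX P n x" "0 \<le> \<epsilon>"
  shows "h_up P n \<epsilon> x = qt (\<lambda>y. pmf (P n) (x,y)) (sc P n x) (mX P n x) \<epsilon>"
proof -
  let ?m = "mX P n x"
  have cy: "ennreal (condYX P n x y) = ennreal (1 / ?m) * ennreal (pmf (P n) (x,y))" for y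
    unfolding condYX_def using assms(1) by (simp add: ennreal_mult[symmetric])
  have "(\<integral>\<^sup>+ y. ennreal (condYX P n x y) \<partial>count_space UNIV) = ennreal (1 / ?m) * (\<integral>\<^sup>+ y. ennreal (pmf (P n) (x,y)) \<partial>count_space UNIV)"
    unfolding cy by (rule nn_integral_cmult) simp
  also have "\<dots> = ennreal (1 / ?m) * ennreal ?m" by (simp only: fst_marg)
  finally have tot: "(\<integral>\<^sup>+ y. ennreal (condYX P n x y) \<partial>count_space UNIV) < \<infinity>"
    by (simp add: ennreal_mult_less_top)
  have c0: "0 \<le> condYX P n x y" for y unfolding condYX_def by simp
  have key: "infsum (condYX P n x) {y. a < sc P n x y} \<le> \<epsilon> \<longleftrightarrow>
      tm (\<lambda>y. pmf (P n) (x,y)) (sc P n x) a \<le> ennreal (\<epsilon> * ?m)" for a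
  proof -
    have i0: "0 \<le> infsum (condYX P n x) {y. a < sc P n x y}" by (rule infsum_nonneg) (simp add: c0)
    have "infsum (condYX P n x) {y. a < sc P n x y} \<le> \<epsilon> \<longleftrightarrow>
        ennreal (infsum (condYX P n x) {y. a < sc P n x y}) \<le> ennreal \<epsilon>"
      using assms(2) by simp
    also have "ennreal (infsum (condYX P n x) {y. a < sc P n x y}) = ennreal (1 / ?m) * tm (\<lambda>y. pmf (P n) (x,y)) (sc P n x) a"
      by (subst infsum_ennreal[OF c0 tot]) (simp add: cy tm_def nn_integral_cmult[symmetric] mult.assoc)
    finally show ?thesis using scale_iff[OF assms] by simp
  qed
  show ?thesis unfolding h_up_def qt_def using key by simp
qed

locale mix =
  fixes P1 P2 P :: "nat \<Rightarrow> ('a::countable list \<times> 'b::countable list) pmf" and \<alpha>1 \<alpha>2 :: real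
  assumes gs1: "gen_source P1" and gs2: "gen_source P2"
    and a1: "0 < \<alpha>1" and a2: "0 < \<alpha>2" and a12: "\<alpha>1 + \<alpha>2 = 1"
    and mixp: "\<And>n z. pmf (P n) z = \<alpha>1 * pmf (P1 n) z + \<alpha>2 * pmf (P2 n) z"
begin

lemma mX_mix: "mX P n x = \<alpha>1 * mX P1 n x + \<alpha>2 * mX P2 n x"
proof -
  have "ennreal (mX P n x) = (\<integral>\<^sup>+ y. ennreal \<alpha>1 * ennreal (pmf (P1 n) (x,y)) + ennreal \<alpha>2 * ennreal (pmf (P2 n) (x,y)) \<partial>count_space UNIV)"
    unfolding fst_marg mixp using a1 a2 by (intro nn_integral_cong) (simp add: ennreal_mult)
  also have "\<dots> = ennreal \<alpha>1 * ennreal (mX P1 n x) + ennreal \<alpha>2 * ennreal (mX P2 n x)"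
    by (simp add: nn_integral_add nn_integral_cmult fst_marg)
  also have "\<dots> = ennreal (\<alpha>1 * mX P1 n x + \<alpha>2 * mX P2 n x)"
    using a1 a2 by (subst ennreal_plus) (auto simp: ennreal_mult)
  finally show ?thesis using a1 a2 by (subst (asm) ennreal_inj) auto
qed

lemma mY_mix: "mY P n y = \<alpha>1 * mY P1 n y + \<alpha>2 * mY P2 n y"
proof -
  have "ennreal (mY P n y) = (\<integral>\<^sup>+ x. ennreal \<alpha>1 * ennreal (pmf (P1 n) (x,y)) + ennreal \<alpha>2 * ennreal (pmf (P2 n) (x,y)) \<partial>count_space UNIV)"
    unfolding snd_marg mixp using a1 a2 by (intro nn_integral_cong) (simp add: ennreal_mult)
  also have "\<dots> = ennreal \<alpha>1 * ennreal (mY P1 n y) + ennreal \<alpha>2 * ennreal (mY P2 n y)"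
    by (simp add: nn_integral_add nn_integral_cmult snd_marg)
  also have "\<dots> = ennreal (\<alpha>1 * mY P1 n y + \<alpha>2 * mY P2 n y)"
    using a1 a2 by (subst ennreal_plus) (auto simp: ennreal_mult)
  finally show ?thesis using a1 a2 by (subst (asm) ennreal_inj) auto
qed

lemma gs: "gen_source P"
  unfolding gen_source_def
proof (intro allI conjI)
  fix n
  show "set_pmf (P n) \<subseteq> {(x, y). length x = n \<and> length y = n}"
  proof
    fix z assume "z \<in> set_pmf (P n)"
    then have "pmf (P1 n) z \<noteq> 0 \<or> pmf (P2 n) z \<noteq> 0" using mixp[of n z] by (auto simp: set_pmf_iff)
    then show "z \<in> {(x, y). length x = n \<and> length y = n}"
      using gs_len[OF gs1] gs_len[OF gs2] by (cases z) blast
  qed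
  show "length x = n \<longrightarrow> 0 < mX P n x" for x
    using gs_mX_pos[OF gs1, of x n] a1 a2 by (auto simp: mX_mix intro!: add_pos_nonneg)
  show "length y = n \<longrightarrow> 0 < mY P n y" for y
    using gs_mY_pos[OF gs1, of y n] a1 a2 by (auto simp: mY_mix intro!: add_pos_nonneg)
qed

end

context mix begin

lemma x_up:
  assumes len: "length x = n" and e: "0 < \<epsilon>" "\<epsilon> < 1"
    and small2: "\<alpha>2 * mX P2 n x \<le> \<epsilon> / 3 * mX P n x"
    and smallB: "(\<integral>\<^sup>+ y. ennreal (pmf (P1 n) (x,y)) * indicator {y. 2 powr c * mY P1 n y < mY P n y} y \<partial>count_space UNIV) \<le> ennreal (\<epsilon> / 3 * mX P1 n x)"
  shows "h_up P n \<epsilon> x \<le> h_up P1 n (\<epsilon> / 3) x + 1 + (c + log 2 (1 / \<alpha>1))"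
proof -
  have m: "0 < mX P n x" using gs_mX_pos[OF gs len] .
  have m1: "0 < mX P1 n x" using gs_mX_pos[OF gs1 len] .
  have m2: "0 \<le> mX P2 n x" by simp
  have "qt (\<lambda>y. pmf (P n) (x,y)) (sc P n x) (mX P n x) \<epsilon> \<le> qt (\<lambda>y. pmf (P1 n) (x,y)) (sc P1 n x) (mX P1 n x) (\<epsilon> / 3) + 1 + (c + log 2 (1 / \<alpha>1))"
  proof (rule up_abs[where u = "\<lambda>y. pmf (P2 n) (x,y)" and mu = "mX P2 n x" and al = \<alpha>1 and be = \<alpha>2
        and B = "{y. 2 powr c * mY P1 n y < mY P n y}"])
    show "(\<integral>\<^sup>+ y. ennreal (pmf (P n) (x,y)) \<partial>count_space UNIV) = ennreal (mX P n x)" by (simp add: fst_marg)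
    show "(\<integral>\<^sup>+ y. ennreal (pmf (P1 n) (x,y)) \<partial>count_space UNIV) = ennreal (mX P1 n x)" by (simp add: fst_marg)
    show "(\<integral>\<^sup>+ y. ennreal (pmf (P2 n) (x,y)) \<partial>count_space UNIV) = ennreal (mX P2 n x)" by (simp add: fst_marg)
    show "pmf (P n) (x, y) = \<alpha>1 * pmf (P1 n) (x, y) + \<alpha>2 * pmf (P2 n) (x, y)" for y by (rule mixp)
    show "mX P n x = \<alpha>1 * mX P1 n x + \<alpha>2 * mX P2 n x" by (rule mX_mix)
    show "sc P n x y \<le> sc P1 n x y + (c + log 2 (1 / \<alpha>1))"
      if w1: "0 < pmf (P1 n) (x, y)" and nB: "y \<notin> {y. 2 powr c * mY P1 n y < mY P n y}" for y
    proof -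
      have wpos: "0 < pmf (P n) (x,y)" using w1 a1 a2 by (simp add: mixp add_pos_nonneg)
      have y1: "0 < mY P1 n y" using w1 pmf_le_snd[of "P1 n" x y] by simp
      have yP: "0 < mY P n y" using wpos pmf_le_snd[of "P n" x y] by simp
      have l1: "log 2 (mY P n y) \<le> c + log 2 (mY P1 n y)"
      proof -
        have "log 2 (mY P n y) \<le> log 2 (2 powr c * mY P1 n y)" using nB yP by (intro log_mono) auto
        also have "\<dots> = c + log 2 (mY P1 n y)" using y1 by (simp add: log_mult)
        finally show ?thesis .
      qed
      have l2: "log 2 \<alpha>1 + log 2 (pmf (P1 n) (x,y)) \<le> log 2 (pmf (P n) (x,y))"
      proof -
        have "log 2 (\<alpha>1 * pmf (P1 n) (x,y)) \<le> log 2 (pmf (P n) (x,y))"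
          using a1 a2 w1 by (intro log_mono) (auto simp: mixp)
        then show ?thesis using a1 w1 by (simp add: log_mult)
      qed
      have l3: "log 2 (1 / \<alpha>1) = - log 2 \<alpha>1" using a1 by (simp add: log_divide)
      show ?thesis using sc_eq[of P n x y, OF wpos] sc_eq[of P1 n x y, OF w1] l1 l2 l3 by linarith
    qed
  qed (use m m1 m2 e a1 a2 small2 smallB sc_nonneg in auto)
  then show ?thesis using h_up_eq[of P n x \<epsilon>, OF m] h_up_eq[of P1 n x "\<epsilon> / 3", OF m1] e by simp
qed

lemma x_lo:
  assumes len: "length x = n" and e: "0 < \<epsilon>" "\<epsilon> < 1"
    and cc: "2 powr (-c) \<le> \<epsilon> / 3"
    and dom: "mX P n x \<le> 2 * \<alpha>1 * mX P1 n x"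
  shows "h_up P1 n \<epsilon> x \<le> h_up P n (\<epsilon> / 3) x + 1 + (c + 1)"
proof -
  have m: "0 < mX P n x" using gs_mX_pos[OF gs len] .
  have m1: "0 < mX P1 n x" using gs_mX_pos[OF gs1 len] .
  let ?B = "{y. pmf (P1 n) (x,y) * mX P n x * 2 powr c < pmf (P n) (x,y) * mX P1 n x}"
  have "qt (\<lambda>y. pmf (P1 n) (x,y)) (sc P1 n x) (mX P1 n x) \<epsilon> \<le> qt (\<lambda>y. pmf (P n) (x,y)) (sc P n x) (mX P n x) (\<epsilon> / 3) + 1 + (c + 1)"
  proof (rule lo_abs[where al = \<alpha>1 and B = ?B])
    show "(\<integral>\<^sup>+ y. ennreal (pmf (P n) (x,y)) \<partial>count_space UNIV) = ennreal (mX P n x)" by (simp add: fst_marg)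
    show "(\<integral>\<^sup>+ y. ennreal (pmf (P1 n) (x,y)) \<partial>count_space UNIV) = ennreal (mX P1 n x)" by (simp add: fst_marg)
    show "\<alpha>1 * pmf (P1 n) (x, y) \<le> pmf (P n) (x, y)" for y using a2 by (simp add: mixp)
    show "(\<integral>\<^sup>+ y. ennreal (pmf (P1 n) (x,y)) * indicator ?B y \<partial>count_space UNIV) \<le> ennreal (\<epsilon> / 3 * mX P1 n x)"
    proof -
      have "(\<integral>\<^sup>+ y. ennreal (pmf (P1 n) (x,y)) * indicator ?B y \<partial>count_space UNIV) \<le> ennreal (2 powr (-c) * mX P1 n x)"
        by (rule massB) (use m in \<open>auto simp: fst_marg\<close>)
      also have "\<dots> \<le> ennreal (\<epsilon> / 3 * mX P1 n x)" using cc m1 by (intro ennreal_leI mult_right_mono) auto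
      finally show ?thesis .
    qed
    show "sc P1 n x y \<le> sc P n x y + (c + 1)" if w1: "0 < pmf (P1 n) (x, y)" and nB: "y \<notin> ?B" for y
    proof -
      have wpos: "0 < pmf (P n) (x,y)" using w1 a1 a2 by (simp add: mixp add_pos_nonneg)
      have y1: "0 < mY P1 n y" using w1 pmf_le_snd[of "P1 n" x y] by simp
      have yP: "0 < mY P n y" using wpos pmf_le_snd[of "P n" x y] by simp
      have l1: "log 2 \<alpha>1 + log 2 (mY P1 n y) \<le> log 2 (mY P n y)"
      proof -
        have "log 2 (\<alpha>1 * mY P1 n y) \<le> log 2 (mY P n y)"
          using a1 a2 y1 by (intro log_mono) (auto simp: mY_mix)
        then show ?thesis using a1 y1 by (simp add: log_mult)
      qed
      have l2: "log 2 (pmf (P n) (x,y)) \<le> (c + 1) + log 2 \<alpha>1 + log 2 (pmf (P1 n) (x,y))"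
      proof -
        have "pmf (P n) (x,y) * mX P1 n x \<le> pmf (P1 n) (x,y) * mX P n x * 2 powr c" using nB by simp
        also have "\<dots> \<le> pmf (P1 n) (x,y) * (2 * \<alpha>1 * mX P1 n x) * 2 powr c"
          using dom w1 by (intro mult_right_mono mult_left_mono) auto
        finally have "pmf (P n) (x,y) \<le> 2 powr (c + 1) * \<alpha>1 * pmf (P1 n) (x,y)"
          using m1 by (simp add: powr_add mult_ac)
        then have "log 2 (pmf (P n) (x,y)) \<le> log 2 (2 powr (c + 1) * \<alpha>1 * pmf (P1 n) (x,y))"
          using wpos by (intro log_mono) auto
        also have "\<dots> = (c + 1) + log 2 \<alpha>1 + log 2 (pmf (P1 n) (x,y))"
          using a1 w1 by (simp add: log_mult)
        finally show ?thesis .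
      qed
      show ?thesis using sc_eq[of P n x y, OF wpos] sc_eq[of P1 n x y, OF w1] l1 l2 by linarith
    qed
  qed (use m m1 e a1 sc_nonneg dom in auto)
  then show ?thesis using h_up_eq[of P n x "\<epsilon> / 3", OF m] h_up_eq[of P1 n x \<epsilon>, OF m1] e by simp
qed

end

lemma ln2_ge: "1/2 \<le> ln (2::real)"
proof -
  have "ln (1/2::real) \<le> 1/2 - 1" by (rule ln_le_minus_one) simp
  then show ?thesis by (simp add: ln_div)
qed

lemma log2_le: "0 < t \<Longrightarrow> log 2 t \<le> 2 * t"
proof -
  assume t: "0 < t"
  have l: "ln t \<le> t" using ln_bound[OF t] .
  have "log 2 t = ln t / ln 2" by (simp add: log_def)
  also have "\<dots> \<le> 2 * t"
  proof (cases "ln t \<le> 0")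
    case True
    have "ln t / ln 2 \<le> 0" using True by (intro divide_nonpos_pos) auto
    then show ?thesis using t by linarith
  next
    case False
    then have "ln t / ln 2 \<le> ln t / (1/2)" using ln2_ge by (intro divide_left_mono) auto
    then show ?thesis using l by simp
  qed
  finally show ?thesis .
qed

lemma div_ennreal_eq: "0 < c \<Longrightarrow> M / ennreal c = ennreal (1 / c) * M"
  by (simp add: divide_ennreal_def inverse_ennreal mult.commute inverse_eq_divide)

definition UIt :: "(nat \<Rightarrow> ('a list \<times> 'b list) pmf) \<Rightarrow> real \<Rightarrow> ennreal" where
  "UIt Q u = (SUP n\<in>{1..}. \<integral>\<^sup>+ z. ennreal (\<bar>z\<bar> * indicator {z. \<bar>z\<bar> \<ge> u} z)
          \<partial>measure_pmf (map_pmf (Zrv Q n) (Q n)))"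

lemma UIt_tendsto: "unif_integrable Q \<Longrightarrow> (UIt Q \<longlongrightarrow> 0) at_top"
  unfolding unif_integrable_def UIt_def by simp

definition ut :: "(nat \<Rightarrow> ('a list \<times> 'b list) pmf) \<Rightarrow> nat \<Rightarrow> real \<Rightarrow> 'a list \<Rightarrow> 'b list \<Rightarrow> real" where
  "ut Q n u x y = sc Q n x y * indicator {t. real n * u \<le> t} (sc Q n x y)"

lemma ut_nonneg: "0 \<le> ut Q n u x y"
  unfolding ut_def using sc_nonneg[of Q n x y] by (simp split: split_indicator)

lemma sc_split: "0 \<le> u \<Longrightarrow> sc Q n x y \<le> real n * u + ut Q n u x y"
  unfolding ut_def by (auto split: split_indicator)

lemma UI_pair:
  fixes Q :: "nat \<Rightarrow> ('a::countable list \<times> 'b::countable list) pmf"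
  assumes n: "1 \<le> n"
  shows "(\<integral>\<^sup>+ x. \<integral>\<^sup>+ y. ennreal (pmf (Q n) (x,y)) * ennreal (ut Q n u x y) \<partial>count_space UNIV \<partial>count_space UNIV) \<le> ennreal (real n) * UIt Q u"
proof -
  have "(\<integral>\<^sup>+ x. \<integral>\<^sup>+ y. ennreal (pmf (Q n) (x,y)) * ennreal (ut Q n u x y) \<partial>count_space UNIV \<partial>count_space UNIV)
      = (\<integral>\<^sup>+ z. ennreal (pmf (Q n) z) * ennreal (ut Q n u (fst z) (snd z)) \<partial>count_space UNIV)"
    by (subst pair_sum) simp
  also have "\<dots> = (\<integral>\<^sup>+ z. ennreal (pmf (Q n) z) * (ennreal (real n) * ennreal (\<bar>Zrv Q n z\<bar> * indicator {z. \<bar>z\<bar> \<ge> u} (Zrv Q n z))) \<partial>count_space UNIV)"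
  proof (intro nn_integral_cong)
    fix z :: "'a list \<times> 'b list"
    have Z: "Zrv Q n z = sc Q n (fst z) (snd z) / real n" unfolding Zrv_def by simp
    have z0: "0 \<le> Zrv Q n z" unfolding Z using sc_nonneg[of Q n "fst z" "snd z"] by simp
    have "ennreal (real n) * ennreal (\<bar>Zrv Q n z\<bar> * indicator {z. \<bar>z\<bar> \<ge> u} (Zrv Q n z)) = ennreal (real n * (Zrv Q n z * indicator {z. \<bar>z\<bar> \<ge> u} (Zrv Q n z)))"
      using z0 by (simp add: ennreal_mult)
    also have "real n * (Zrv Q n z * indicator {z. \<bar>z\<bar> \<ge> u} (Zrv Q n z)) = ut Q n u (fst z) (snd z)"
      unfolding ut_def using n z0 by (auto simp: Z field_simps split: split_indicator)
    finally show "ennreal (pmf (Q n) z) * ennreal (ut Q n u (fst z) (snd z)) = ennreal (pmf (Q n) z) * (ennreal (real n) * ennreal (\<bar>Zrv Q n z\<bar> * indicator {z. \<bar>z\<bar> \<ge> u} (Zrv Q n z)))"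
      by simp
  qed
  also have "\<dots> = ennreal (real n) * (\<integral>\<^sup>+ z. ennreal (\<bar>z\<bar> * indicator {z. \<bar>z\<bar> \<ge> u} z) \<partial>measure_pmf (map_pmf (Zrv Q n) (Q n)))"
    by (simp add: nn_integral_measure_pmf[symmetric] nn_integral_cmult mult.left_commute)
  also have "\<dots> \<le> ennreal (real n) * UIt Q u"
    unfolding UIt_def using n by (intro mult_left_mono SUP_upper) auto
  finally show ?thesis .
qed

lemma swap_marg:
  fixes Q :: "('a::countable \<times> 'b::countable) pmf"
  shows "(\<integral>\<^sup>+ x. \<integral>\<^sup>+ y. ennreal (pmf Q (x,y)) * f y \<partial>count_space UNIV \<partial>count_space UNIV) = (\<integral>\<^sup>+ y. ennreal (pmf (map_pmf snd Q) y) * f y \<partial>count_space UNIV)"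
  by (subst pair_sum_swap) (simp add: snd_marg nn_integral_multc)


lemma markov_x:
  fixes Q :: "nat \<Rightarrow> ('a::countable list \<times> 'b::countable list) pmf"
  assumes gs: "gen_source Q" and e: "0 < \<epsilon>" "\<epsilon> < 1"
  shows "ennreal (mX Q n x) * ennreal (h_up Q n \<epsilon> x) \<le> ennreal (1 / \<epsilon>) * (\<integral>\<^sup>+ y. ennreal (pmf (Q n) (x,y) * sc Q n x y) \<partial>count_space UNIV) + ennreal (mX Q n x)"
proof (cases "length x = n")
  case False
  then show ?thesis using gs_mX_zero[OF gs False] by simp
next
  case True
  have m: "0 < mX Q n x" using gs_mX_pos[OF gs True] .
  let ?M = "(\<integral>\<^sup>+ y. ennreal (pmf (Q n) (x,y) * sc Q n x y) \<partial>count_space UNIV)"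
  have heq: "h_up Q n \<epsilon> x = qt (\<lambda>y. pmf (Q n) (x,y)) (sc Q n x) (mX Q n x) \<epsilon>"
    using h_up_eq[of Q n x \<epsilon>, OF m] e by simp
  have "ennreal (h_up Q n \<epsilon> x) \<le> ?M / ennreal (\<epsilon> * mX Q n x) + 1"
    unfolding heq using e
    by (intro qt_markov[OF sc_nonneg _ m e]) (auto simp: fst_marg)
  also have "\<dots> = ennreal (1 / (\<epsilon> * mX Q n x)) * ?M + 1" using e m by (simp add: div_ennreal_eq)
  finally have "ennreal (mX Q n x) * ennreal (h_up Q n \<epsilon> x) \<le> ennreal (mX Q n x) * (ennreal (1 / (\<epsilon> * mX Q n x)) * ?M + 1)"
    by (rule mult_left_mono) simp
  also have "\<dots> = (ennreal (mX Q n x) * ennreal (1 / (\<epsilon> * mX Q n x))) * ?M + ennreal (mX Q n x)"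
    by (simp add: distrib_left mult.assoc)
  also have "ennreal (mX Q n x) * ennreal (1 / (\<epsilon> * mX Q n x)) = ennreal (1 / \<epsilon>)"
    using m e by (simp add: ennreal_mult[symmetric])
  finally show ?thesis .
qed

lemma sum_sc_bound:
  fixes Q :: "nat \<Rightarrow> ('a::countable list \<times> 'b::countable list) pmf"
  assumes n: "1 \<le> n" and u: "0 \<le> u"
  shows "(\<integral>\<^sup>+ x. indicator A x * (\<integral>\<^sup>+ y. ennreal (pmf (Q n) (x,y) * sc Q n x y) \<partial>count_space UNIV) \<partial>count_space UNIV)
    \<le> ennreal (real n * u) * (\<integral>\<^sup>+ x. ennreal (mX Q n x) * indicator A x \<partial>count_space UNIV) + ennreal (real n) * UIt Q u"
proof -
  have "(\<integral>\<^sup>+ x. indicator A x * (\<integral>\<^sup>+ y. ennreal (pmf (Q n) (x,y) * sc Q n x y) \<partial>count_space UNIV) \<partial>count_space UNIV)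
      \<le> (\<integral>\<^sup>+ x. indicator A x * (\<integral>\<^sup>+ y. ennreal (real n * u) * ennreal (pmf (Q n) (x,y)) + ennreal (pmf (Q n) (x,y)) * ennreal (ut Q n u x y) \<partial>count_space UNIV) \<partial>count_space UNIV)"
  proof (intro nn_integral_mono mult_left_mono)
    fix x y
    have "pmf (Q n) (x,y) * sc Q n x y \<le> pmf (Q n) (x,y) * (real n * u + ut Q n u x y)"
      by (intro mult_left_mono sc_split u) simp
    then have "ennreal (pmf (Q n) (x,y) * sc Q n x y) \<le> ennreal (real n * u * pmf (Q n) (x,y) + pmf (Q n) (x,y) * ut Q n u x y)"
      by (intro ennreal_leI) (simp add: algebra_simps)
    also have "\<dots> = ennreal (real n * u) * ennreal (pmf (Q n) (x,y)) + ennreal (pmf (Q n) (x,y)) * ennreal (ut Q n u x y)"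
      using u ut_nonneg[of Q n u x y] by (simp add: ennreal_mult ennreal_plus)
    finally show "ennreal (pmf (Q n) (x,y) * sc Q n x y) \<le> ennreal (real n * u) * ennreal (pmf (Q n) (x,y)) + ennreal (pmf (Q n) (x,y)) * ennreal (ut Q n u x y)" .
  qed simp
  also have "\<dots> = (\<integral>\<^sup>+ x. ennreal (real n * u) * (ennreal (mX Q n x) * indicator A x) + indicator A x * (\<integral>\<^sup>+ y. ennreal (pmf (Q n) (x,y)) * ennreal (ut Q n u x y) \<partial>count_space UNIV) \<partial>count_space UNIV)"
    by (intro nn_integral_cong) (simp add: nn_integral_add nn_integral_cmult fst_marg distrib_left mult_ac)
  also have "\<dots> = ennreal (real n * u) * (\<integral>\<^sup>+ x. ennreal (mX Q n x) * indicator A x \<partial>count_space UNIV) + (\<integral>\<^sup>+ x. indicator A x * (\<integral>\<^sup>+ y. ennreal (pmf (Q n) (x,y)) * ennreal (ut Q n u x y) \<partial>count_space UNIV) \<partial>count_space UNIV)"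
    by (simp add: nn_integral_add nn_integral_cmult)
  also have "\<dots> \<le> ennreal (real n * u) * (\<integral>\<^sup>+ x. ennreal (mX Q n x) * indicator A x \<partial>count_space UNIV) + ennreal (real n) * UIt Q u"
  proof (intro add_left_mono)
    have "(\<integral>\<^sup>+ x. indicator A x * (\<integral>\<^sup>+ y. ennreal (pmf (Q n) (x,y)) * ennreal (ut Q n u x y) \<partial>count_space UNIV) \<partial>count_space UNIV)
        \<le> (\<integral>\<^sup>+ x. (\<integral>\<^sup>+ y. ennreal (pmf (Q n) (x,y)) * ennreal (ut Q n u x y) \<partial>count_space UNIV) \<partial>count_space UNIV)"
      by (intro nn_integral_mono) (simp split: split_indicator)
    also have "\<dots> \<le> ennreal (real n) * UIt Q u" by (rule UI_pair[OF n])
    finally show "(\<integral>\<^sup>+ x. indicator A x * (\<integral>\<^sup>+ y. ennreal (pmf (Q n) (x,y)) * ennreal (ut Q n u x y) \<partial>count_space UNIV) \<partial>count_space UNIV) \<le> ennreal (real n) * UIt Q u" .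
  qed
  finally show ?thesis .
qed

lemma bad_self:
  fixes Q :: "nat \<Rightarrow> ('a::countable list \<times> 'b::countable list) pmf"
  assumes gs: "gen_source Q" and e: "0 < \<epsilon>" "\<epsilon> < 1" and n: "1 \<le> n" and u: "0 \<le> u"
  shows "(\<integral>\<^sup>+ x. ennreal (mX Q n x) * indicator A x * ennreal (h_up Q n \<epsilon> x) \<partial>count_space UNIV)
    \<le> (\<integral>\<^sup>+ x. ennreal (mX Q n x) * indicator A x \<partial>count_space UNIV) + ennreal (1 / \<epsilon>) *
       (ennreal (real n * u) * (\<integral>\<^sup>+ x. ennreal (mX Q n x) * indicator A x \<partial>count_space UNIV) + ennreal (real n) * UIt Q u)"
proof -
  have "(\<integral>\<^sup>+ x. ennreal (mX Q n x) * indicator A x * ennreal (h_up Q n \<epsilon> x) \<partial>count_space UNIV)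
    \<le> (\<integral>\<^sup>+ x. ennreal (mX Q n x) * indicator A x + ennreal (1 / \<epsilon>) * (indicator A x * (\<integral>\<^sup>+ y. ennreal (pmf (Q n) (x,y) * sc Q n x y) \<partial>count_space UNIV)) \<partial>count_space UNIV)"
  proof (intro nn_integral_mono)
    fix x
    show "ennreal (mX Q n x) * indicator A x * ennreal (h_up Q n \<epsilon> x) \<le> ennreal (mX Q n x) * indicator A x + ennreal (1 / \<epsilon>) * (indicator A x * (\<integral>\<^sup>+ y. ennreal (pmf (Q n) (x,y) * sc Q n x y) \<partial>count_space UNIV))"
      using markov_x[OF gs e, of n x] by (cases "x \<in> A") (auto simp: add.commute)
  qed
  also have "\<dots> = (\<integral>\<^sup>+ x. ennreal (mX Q n x) * indicator A x \<partial>count_space UNIV) + ennreal (1 / \<epsilon>) * (\<integral>\<^sup>+ x. indicator A x * (\<integral>\<^sup>+ y. ennreal (pmf (Q n) (x,y) * sc Q n x y) \<partial>count_space UNIV) \<partial>count_space UNIV)"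
    by (simp add: nn_integral_add nn_integral_cmult)
  also have "\<dots> \<le> (\<integral>\<^sup>+ x. ennreal (mX Q n x) * indicator A x \<partial>count_space UNIV) + ennreal (1 / \<epsilon>) *
       (ennreal (real n * u) * (\<integral>\<^sup>+ x. ennreal (mX Q n x) * indicator A x \<partial>count_space UNIV) + ennreal (real n) * UIt Q u)"
    by (intro add_left_mono mult_left_mono sum_sc_bound n u) simp
  finally show ?thesis .
qed


context mix begin

definition rp :: "(nat \<Rightarrow> ('a list \<times> 'b list) pmf) \<Rightarrow> nat \<Rightarrow> 'b list \<Rightarrow> real" where
  "rp Q n y = max 0 (log 2 (mY P n y) - log 2 (mY Q n y))"

lemma rp_sum:
  fixes Q :: "nat \<Rightarrow> ('a list \<times> 'b list) pmf"
  assumes QP: "\<And>y. 0 < mY Q n y \<Longrightarrow> 0 < mY P n y"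
  shows "(\<integral>\<^sup>+ x. \<integral>\<^sup>+ y. ennreal (pmf (Q n) (x,y)) * ennreal (rp Q n y) \<partial>count_space UNIV \<partial>count_space UNIV) \<le> 2"
proof -
  have "(\<integral>\<^sup>+ x. \<integral>\<^sup>+ y. ennreal (pmf (Q n) (x,y)) * ennreal (rp Q n y) \<partial>count_space UNIV \<partial>count_space UNIV)
     = (\<integral>\<^sup>+ y. ennreal (mY Q n y) * ennreal (rp Q n y) \<partial>count_space UNIV)" by (rule swap_marg)
  also have "\<dots> \<le> (\<integral>\<^sup>+ y. 2 * ennreal (mY P n y) \<partial>count_space UNIV)"
  proof (intro nn_integral_mono)
    fix y
    have "mY Q n y * rp Q n y \<le> 2 * mY P n y"
    proof (cases "0 < mY Q n y \<and> 0 < log 2 (mY P n y) - log 2 (mY Q n y)")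
      case False
      have "mY Q n y = 0 \<or> rp Q n y = 0" using False pmf_nonneg[of "map_pmf snd (Q n)" y]
        unfolding rp_def by (auto simp: max_def)
      then have "mY Q n y * rp Q n y = 0" by auto
      moreover have "0 \<le> mY P n y" by simp
      ultimately show ?thesis by linarith
    next
      case True
      then have yP: "0 < mY P n y" using QP by blast
      have "rp Q n y = log 2 (mY P n y / mY Q n y)" unfolding rp_def using True yP by (simp add: log_divide)
      also have "\<dots> \<le> 2 * (mY P n y / mY Q n y)" using True yP by (intro log2_le) simp
      finally show ?thesis using True by (simp add: field_simps)
    qed
    have r0: "0 \<le> rp Q n y" unfolding rp_def by simp
    have "ennreal (mY Q n y) * ennreal (rp Q n y) = ennreal (mY Q n y * rp Q n y)"
      using r0 by (simp add: ennreal_mult)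
    also have "\<dots> \<le> ennreal (2 * mY P n y)" using \<open>mY Q n y * rp Q n y \<le> 2 * mY P n y\<close> by (rule ennreal_leI)
    also have "\<dots> = 2 * ennreal (mY P n y)" by (simp add: ennreal_mult)
    finally show "ennreal (mY Q n y) * ennreal (rp Q n y) \<le> 2 * ennreal (mY P n y)" .
  qed
  also have "\<dots> = 2" by (simp add: nn_integral_cmult pmf_sum)
  finally show ?thesis .
qed

end


context mix begin

lemma L_nonneg: "0 \<le> log 2 (1 / \<alpha>1)" "0 \<le> log 2 (1 / \<alpha>2)"
  using a1 a2 a12 by auto

lemma s_comp:
  assumes a: "0 < a" and wq: "0 < pmf (Q n) (x,y)" and dom: "a * pmf (Q n) (x,y) \<le> pmf (P n) (x,y)"
  shows "sc P n x y \<le> sc Q n x y + rp Q n y + log 2 (1 / a)"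
proof -
  have wpos: "0 < pmf (P n) (x,y)" using a wq dom by (meson mult_pos_pos order_less_le_trans)
  have l2: "log 2 a + log 2 (pmf (Q n) (x,y)) \<le> log 2 (pmf (P n) (x,y))"
  proof -
    have "log 2 (a * pmf (Q n) (x,y)) \<le> log 2 (pmf (P n) (x,y))" using a wq dom by (intro log_mono) auto
    then show ?thesis using a wq by (simp add: log_mult)
  qed
  have r: "log 2 (mY P n y) - log 2 (mY Q n y) \<le> rp Q n y" unfolding rp_def by simp
  have l3: "log 2 (1 / a) = - log 2 a" using a by (simp add: log_divide)
  show ?thesis using sc_eq[of P n x y, OF wpos] sc_eq[of Q n x y, OF wq] l2 r l3 by linarith
qed

lemma ws_bound:
  assumes a: "0 < a" and dom: "a * pmf (Q n) (x,y) \<le> pmf (P n) (x,y)" and u: "0 \<le> u" and L: "0 \<le> log 2 (1 / a)"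
  shows "pmf (Q n) (x,y) * sc P n x y \<le> pmf (Q n) (x,y) * (real n * u + log 2 (1 / a)) + pmf (Q n) (x,y) * (ut Q n u x y + rp Q n y)"
proof (cases "pmf (Q n) (x,y) = 0")
  case True then show ?thesis by simp
next
  case False
  then have wq: "0 < pmf (Q n) (x,y)" by (simp add: order_less_le)
  have "sc P n x y \<le> (real n * u + log 2 (1 / a)) + (ut Q n u x y + rp Q n y)"
    using s_comp[of a Q n x y, OF a wq dom] sc_split[OF u, of Q n x y] by linarith
  then have "pmf (Q n) (x,y) * sc P n x y \<le> pmf (Q n) (x,y) * ((real n * u + log 2 (1 / a)) + (ut Q n u x y + rp Q n y))"
    by (intro mult_left_mono) auto
  then show ?thesis by (simp add: distrib_left)
qed

lemma y_bound:
  assumes len: "length x = n" and u: "0 \<le> u"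
  defines "\<rho> \<equiv> mX P1 n x / mX P n x"
  shows "\<rho> * pmf (P n) (x,y) * sc P n x y \<le>
     pmf (P1 n) (x,y) * (real n * u + log 2 (1 / \<alpha>1)) + (\<alpha>2 * \<rho> * pmf (P2 n) (x,y)) * (real n * u + log 2 (1 / \<alpha>2))
     + pmf (P1 n) (x,y) * (ut P1 n u x y + rp P1 n y) + (\<alpha>2 / \<alpha>1) * pmf (P2 n) (x,y) * (ut P2 n u x y + rp P2 n y)"
proof -
  have m: "0 < mX P n x" using gs_mX_pos[OF gs len] .
  have r0: "0 \<le> \<rho>" unfolding \<rho>_def by simp
  have r1: "\<alpha>1 * \<rho> \<le> 1" unfolding \<rho>_def using m a2 by (simp add: mX_mix field_simps)
  have r2: "\<alpha>2 * \<rho> \<le> \<alpha>2 / \<alpha>1" using r1 a1 a2 by (simp add: field_simps)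
  let ?w1 = "pmf (P1 n) (x,y)" and ?w2 = "pmf (P2 n) (x,y)" and ?s = "sc P n x y"
  have s0: "0 \<le> ?s" by (rule sc_nonneg)
  have b1: "?w1 * ?s \<le> ?w1 * (real n * u + log 2 (1 / \<alpha>1)) + ?w1 * (ut P1 n u x y + rp P1 n y)"
    by (rule ws_bound[OF a1 _ u L_nonneg(1)]) (use a2 in \<open>simp add: mixp\<close>)
  have b2: "?w2 * ?s \<le> ?w2 * (real n * u + log 2 (1 / \<alpha>2)) + ?w2 * (ut P2 n u x y + rp P2 n y)"
    by (rule ws_bound[OF a2 _ u L_nonneg(2)]) (use a1 in \<open>simp add: mixp\<close>)
  have t0: "0 \<le> ut P2 n u x y + rp P2 n y" using ut_nonneg[of P2 n u x y] unfolding rp_def by simp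
  have "\<rho> * pmf (P n) (x,y) * ?s = (\<alpha>1 * \<rho>) * (?w1 * ?s) + (\<alpha>2 * \<rho>) * (?w2 * ?s)"
    by (simp add: mixp algebra_simps)
  also have "(\<alpha>1 * \<rho>) * (?w1 * ?s) \<le> ?w1 * ?s" using r1 s0 a1 r0 by (intro mult_left_le_one_le) auto
  also have "(\<alpha>2 * \<rho>) * (?w2 * ?s) \<le> (\<alpha>2 * \<rho>) * (?w2 * (real n * u + log 2 (1 / \<alpha>2)) + ?w2 * (ut P2 n u x y + rp P2 n y))"
    using b2 a2 r0 by (intro mult_left_mono) auto
  also have "\<dots> = (\<alpha>2 * \<rho> * ?w2) * (real n * u + log 2 (1 / \<alpha>2)) + (\<alpha>2 * \<rho>) * (?w2 * (ut P2 n u x y + rp P2 n y))"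
    by (simp add: algebra_simps)
  also have "(\<alpha>2 * \<rho>) * (?w2 * (ut P2 n u x y + rp P2 n y)) \<le> (\<alpha>2 / \<alpha>1) * (?w2 * (ut P2 n u x y + rp P2 n y))"
    using r2 t0 by (intro mult_right_mono) auto
  finally show ?thesis using b1 by (simp add: algebra_simps)
qed

end

context mix begin

definition FF :: "(nat \<Rightarrow> ('a list \<times> 'b list) pmf) \<Rightarrow> nat \<Rightarrow> real \<Rightarrow> 'a list \<Rightarrow> ennreal" where
  "FF Q n u x = (\<integral>\<^sup>+ y. ennreal (pmf (Q n) (x,y)) * ennreal (ut Q n u x y + rp Q n y) \<partial>count_space UNIV)"

lemma x_mix_bound:
  assumes u: "0 \<le> u" and e: "0 < \<epsilon>" "\<epsilon> < 1"
  shows "ennreal (mX P1 n x) * ennreal (h_up P n \<epsilon> x) \<le> ennreal (mX P1 n x) + ennreal (1 / \<epsilon>) *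
     (ennreal (mX P1 n x) * ennreal (2 * (real n * u) + log 2 (1 / \<alpha>1) + log 2 (1 / \<alpha>2)) + FF P1 n u x + ennreal (\<alpha>2 / \<alpha>1) * FF P2 n u x)"
proof (cases "length x = n")
  case False
  then show ?thesis using gs_mX_zero[OF gs1 False] by simp
next
  case len: True
  have m: "0 < mX P n x" using gs_mX_pos[OF gs len] .
  define \<rho> where "\<rho> = mX P1 n x / mX P n x"
  have r0: "0 \<le> \<rho>" unfolding \<rho>_def by simp
  have L1: "0 \<le> log 2 (1 / \<alpha>1)" and L2: "0 \<le> log 2 (1 / \<alpha>2)" using L_nonneg by auto
  have nu: "0 \<le> real n * u" using u by simp
  let ?M = "(\<integral>\<^sup>+ y. ennreal (pmf (P n) (x,y) * sc P n x y) \<partial>count_space UNIV)"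
  have mk: "ennreal (mX P n x) * ennreal (h_up P n \<epsilon> x) \<le> ennreal (1 / \<epsilon>) * ?M + ennreal (mX P n x)"
    by (rule markov_x[OF gs e])
  have m1eq: "ennreal (mX P1 n x) = ennreal \<rho> * ennreal (mX P n x)"
    unfolding \<rho>_def using m by (simp add: ennreal_mult[symmetric])
  have "ennreal (mX P1 n x) * ennreal (h_up P n \<epsilon> x) = ennreal \<rho> * (ennreal (mX P n x) * ennreal (h_up P n \<epsilon> x))"
    unfolding m1eq by (simp add: mult.assoc)
  also have "\<dots> \<le> ennreal \<rho> * (ennreal (1 / \<epsilon>) * ?M + ennreal (mX P n x))"
    by (intro mult_left_mono mk) simp
  also have "\<dots> = ennreal (1 / \<epsilon>) * (ennreal \<rho> * ?M) + ennreal (mX P1 n x)"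
    unfolding m1eq by (simp add: distrib_left mult_ac)
  also have "ennreal \<rho> * ?M \<le> ennreal (mX P1 n x) * ennreal (2 * (real n * u) + log 2 (1 / \<alpha>1) + log 2 (1 / \<alpha>2)) + FF P1 n u x + ennreal (\<alpha>2 / \<alpha>1) * FF P2 n u x"
  proof -
    let ?T1 = "\<lambda>y. ennreal (pmf (P1 n) (x,y) * (real n * u + log 2 (1 / \<alpha>1)))"
    let ?T2 = "\<lambda>y. ennreal ((\<alpha>2 * \<rho> * pmf (P2 n) (x,y)) * (real n * u + log 2 (1 / \<alpha>2)))"
    let ?T3 = "\<lambda>y. ennreal (pmf (P1 n) (x,y) * (ut P1 n u x y + rp P1 n y))"
    let ?T4 = "\<lambda>y. ennreal ((\<alpha>2 / \<alpha>1) * pmf (P2 n) (x,y) * (ut P2 n u x y + rp P2 n y))"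
    have t3: "0 \<le> ut Q n u x y + rp Q n y" for Q y using ut_nonneg[of Q n u x y] unfolding rp_def by simp
    have ps0: "0 \<le> pmf (P n) (x,y) * sc P n x y" for y by (simp add: sc_nonneg)
    have "ennreal \<rho> * ?M = (\<integral>\<^sup>+ y. ennreal \<rho> * ennreal (pmf (P n) (x,y) * sc P n x y) \<partial>count_space UNIV)"
      by (rule nn_integral_cmult[symmetric]) simp
    also have "\<dots> = (\<integral>\<^sup>+ y. ennreal (\<rho> * pmf (P n) (x,y) * sc P n x y) \<partial>count_space UNIV)"
      by (intro nn_integral_cong) (simp add: ennreal_mult[OF r0 ps0, symmetric] mult.assoc)
    also have "\<dots> \<le> (\<integral>\<^sup>+ y. ?T1 y + ?T2 y + ?T3 y + ?T4 y \<partial>count_space UNIV)"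
    proof (intro nn_integral_mono)
      fix y
      have "ennreal (\<rho> * pmf (P n) (x,y) * sc P n x y) \<le> ennreal (pmf (P1 n) (x,y) * (real n * u + log 2 (1 / \<alpha>1)) + (\<alpha>2 * \<rho> * pmf (P2 n) (x,y)) * (real n * u + log 2 (1 / \<alpha>2))
     + pmf (P1 n) (x,y) * (ut P1 n u x y + rp P1 n y) + (\<alpha>2 / \<alpha>1) * pmf (P2 n) (x,y) * (ut P2 n u x y + rp P2 n y))"
        by (intro ennreal_leI) (use y_bound[OF len u, of y] in \<open>simp add: \<rho>_def\<close>)
      also have "\<dots> = ?T1 y + ?T2 y + ?T3 y + ?T4 y"
        using L1 L2 nu a1 a2 r0 t3[of P1 y] t3[of P2 y]
        by (simp add: ennreal_plus[symmetric] del: ennreal_plus)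
      finally show "ennreal (\<rho> * pmf (P n) (x,y) * sc P n x y) \<le> ?T1 y + ?T2 y + ?T3 y + ?T4 y" .
    qed
    also have "(\<integral>\<^sup>+ y. ?T1 y + ?T2 y + ?T3 y + ?T4 y \<partial>count_space UNIV) =
      (\<integral>\<^sup>+ y. ennreal (pmf (P1 n) (x,y)) * ennreal (real n * u + log 2 (1 / \<alpha>1)) + ennreal (\<alpha>2 * \<rho>) * (ennreal (pmf (P2 n) (x,y)) * ennreal (real n * u + log 2 (1 / \<alpha>2)))
        + ennreal (pmf (P1 n) (x,y)) * ennreal (ut P1 n u x y + rp P1 n y) + ennreal (\<alpha>2 / \<alpha>1) * (ennreal (pmf (P2 n) (x,y)) * ennreal (ut P2 n u x y + rp P2 n y)) \<partial>count_space UNIV)"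
    proof (intro nn_integral_cong)
      fix y
      have k1: "0 \<le> real n * u + log 2 (1 / \<alpha>1)" and k2: "0 \<le> real n * u + log 2 (1 / \<alpha>2)" using L1 L2 nu by auto
      have e1: "?T1 y = ennreal (pmf (P1 n) (x,y)) * ennreal (real n * u + log 2 (1 / \<alpha>1))" by (rule ennreal_mult''[OF k1])
      have e2: "?T2 y = ennreal (\<alpha>2 * \<rho>) * (ennreal (pmf (P2 n) (x,y)) * ennreal (real n * u + log 2 (1 / \<alpha>2)))"
        using a2 r0 k2 by (simp add: ennreal_mult'' ennreal_mult mult.assoc)
      have e3: "?T3 y = ennreal (pmf (P1 n) (x,y)) * ennreal (ut P1 n u x y + rp P1 n y)" by (rule ennreal_mult''[OF t3])
      have e4: "?T4 y = ennreal (\<alpha>2 / \<alpha>1) * (ennreal (pmf (P2 n) (x,y)) * ennreal (ut P2 n u x y + rp P2 n y))"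
      proof -
        have "?T4 y = ennreal (\<alpha>2 / \<alpha>1) * ennreal (pmf (P2 n) (x,y) * (ut P2 n u x y + rp P2 n y))"
          using a1 a2 t3[of P2 y] by (simp only: mult.assoc) (rule ennreal_mult, auto)
        also have "ennreal (pmf (P2 n) (x,y) * (ut P2 n u x y + rp P2 n y)) = ennreal (pmf (P2 n) (x,y)) * ennreal (ut P2 n u x y + rp P2 n y)"
          by (rule ennreal_mult''[OF t3])
        finally show ?thesis .
      qed
      show "?T1 y + ?T2 y + ?T3 y + ?T4 y = ennreal (pmf (P1 n) (x,y)) * ennreal (real n * u + log 2 (1 / \<alpha>1)) + ennreal (\<alpha>2 * \<rho>) * (ennreal (pmf (P2 n) (x,y)) * ennreal (real n * u + log 2 (1 / \<alpha>2)))
        + ennreal (pmf (P1 n) (x,y)) * ennreal (ut P1 n u x y + rp P1 n y) + ennreal (\<alpha>2 / \<alpha>1) * (ennreal (pmf (P2 n) (x,y)) * ennreal (ut P2 n u x y + rp P2 n y))"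
        unfolding e1 e2 e3 e4 ..
    qed
    also have "\<dots> = ennreal (mX P1 n x) * ennreal (real n * u + log 2 (1 / \<alpha>1)) + ennreal (\<alpha>2 * \<rho>) * (ennreal (mX P2 n x) * ennreal (real n * u + log 2 (1 / \<alpha>2)))
        + FF P1 n u x + ennreal (\<alpha>2 / \<alpha>1) * FF P2 n u x"
      unfolding FF_def by (simp add: nn_integral_add nn_integral_cmult nn_integral_multc fst_marg)
    also have "ennreal (\<alpha>2 * \<rho>) * (ennreal (mX P2 n x) * ennreal (real n * u + log 2 (1 / \<alpha>2))) \<le> ennreal (mX P1 n x) * ennreal (real n * u + log 2 (1 / \<alpha>2))"
    proof -
      have "\<alpha>2 * \<rho> * mX P2 n x \<le> mX P1 n x" unfolding \<rho>_def using m a1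
        by (simp add: mX_mix field_simps)
      then have "ennreal (\<alpha>2 * \<rho>) * ennreal (mX P2 n x) \<le> ennreal (mX P1 n x)"
        using a2 r0 by (simp add: ennreal_mult[symmetric] ennreal_leI)
      then show ?thesis by (simp add: mult.assoc[symmetric] mult_right_mono)
    qed
    also have "ennreal (mX P1 n x) * ennreal (real n * u + log 2 (1 / \<alpha>1)) + ennreal (mX P1 n x) * ennreal (real n * u + log 2 (1 / \<alpha>2))
        = ennreal (mX P1 n x) * ennreal (2 * (real n * u) + log 2 (1 / \<alpha>1) + log 2 (1 / \<alpha>2))"
      using L1 L2 nu by (simp add: distrib_left[symmetric] ennreal_plus[symmetric] del: ennreal_plus) (simp add: algebra_simps)
    finally show ?thesis by (simp add: add.assoc)
  qed
  finally show ?thesis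
    by (simp add: add.commute mult_left_mono add_left_mono)
qed

end

context mix begin

lemma FF_sum:
  assumes n: "1 \<le> n" and QP: "\<And>y. 0 < mY Q n y \<Longrightarrow> 0 < mY P n y"
  shows "(\<integral>\<^sup>+ x. FF Q n u x \<partial>count_space UNIV) \<le> ennreal (real n) * UIt Q u + 2"
proof -
  have r0: "0 \<le> rp Q n y" for y unfolding rp_def by simp
  have "(\<integral>\<^sup>+ x. FF Q n u x \<partial>count_space UNIV) = (\<integral>\<^sup>+ x. (\<integral>\<^sup>+ y. ennreal (pmf (Q n) (x,y)) * ennreal (ut Q n u x y) \<partial>count_space UNIV)
      + (\<integral>\<^sup>+ y. ennreal (pmf (Q n) (x,y)) * ennreal (rp Q n y) \<partial>count_space UNIV) \<partial>count_space UNIV)"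
    unfolding FF_def
  proof (intro nn_integral_cong)
    fix x
    have "\<And>y. ennreal (pmf (Q n) (x,y)) * ennreal (ut Q n u x y + rp Q n y) = ennreal (pmf (Q n) (x,y)) * ennreal (ut Q n u x y) + ennreal (pmf (Q n) (x,y)) * ennreal (rp Q n y)"
    proof -
      fix y
      have "ennreal (ut Q n u x y + rp Q n y) = ennreal (ut Q n u x y) + ennreal (rp Q n y)"
        using ut_nonneg[of Q n u x y] r0[of y] by (rule ennreal_plus)
      then show "ennreal (pmf (Q n) (x,y)) * ennreal (ut Q n u x y + rp Q n y) = ennreal (pmf (Q n) (x,y)) * ennreal (ut Q n u x y) + ennreal (pmf (Q n) (x,y)) * ennreal (rp Q n y)"
        by (simp add: distrib_left)
    qed
    then show "(\<integral>\<^sup>+ y. ennreal (pmf (Q n) (x,y)) * ennreal (ut Q n u x y + rp Q n y) \<partial>count_space UNIV) = (\<integral>\<^sup>+ y. ennreal (pmf (Q n) (x,y)) * ennreal (ut Q n u x y) \<partial>count_space UNIV)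
      + (\<integral>\<^sup>+ y. ennreal (pmf (Q n) (x,y)) * ennreal (rp Q n y) \<partial>count_space UNIV)"
      by (simp add: nn_integral_add)
  qed
  also have "\<dots> = (\<integral>\<^sup>+ x. \<integral>\<^sup>+ y. ennreal (pmf (Q n) (x,y)) * ennreal (ut Q n u x y) \<partial>count_space UNIV \<partial>count_space UNIV)
      + (\<integral>\<^sup>+ x. \<integral>\<^sup>+ y. ennreal (pmf (Q n) (x,y)) * ennreal (rp Q n y) \<partial>count_space UNIV \<partial>count_space UNIV)"
    by (simp add: nn_integral_add)
  also have "\<dots> \<le> ennreal (real n) * UIt Q u + 2"
    by (intro add_mono UI_pair n rp_sum QP)
  finally show ?thesis .
qed

lemma bad_mix:
  assumes n: "1 \<le> n" and u: "0 \<le> u" and e: "0 < \<epsilon>" "\<epsilon> < 1"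
  shows "(\<integral>\<^sup>+ x. ennreal (mX P1 n x) * indicator A x * ennreal (h_up P n \<epsilon> x) \<partial>count_space UNIV)
    \<le> (\<integral>\<^sup>+ x. ennreal (mX P1 n x) * indicator A x \<partial>count_space UNIV) + ennreal (1 / \<epsilon>) *
       (ennreal (2 * (real n * u) + log 2 (1 / \<alpha>1) + log 2 (1 / \<alpha>2)) * (\<integral>\<^sup>+ x. ennreal (mX P1 n x) * indicator A x \<partial>count_space UNIV)
        + (ennreal (real n) * UIt P1 u + 2) + ennreal (\<alpha>2 / \<alpha>1) * (ennreal (real n) * UIt P2 u + 2))"
proof -
  let ?C = "ennreal (2 * (real n * u) + log 2 (1 / \<alpha>1) + log 2 (1 / \<alpha>2))"
  have "(\<integral>\<^sup>+ x. ennreal (mX P1 n x) * indicator A x * ennreal (h_up P n \<epsilon> x) \<partial>count_space UNIV)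
     \<le> (\<integral>\<^sup>+ x. ennreal (mX P1 n x) * indicator A x + ennreal (1 / \<epsilon>) * (?C * (ennreal (mX P1 n x) * indicator A x) + FF P1 n u x + ennreal (\<alpha>2 / \<alpha>1) * FF P2 n u x) \<partial>count_space UNIV)"
  proof (intro nn_integral_mono)
    fix x
    show "ennreal (mX P1 n x) * indicator A x * ennreal (h_up P n \<epsilon> x) \<le> ennreal (mX P1 n x) * indicator A x + ennreal (1 / \<epsilon>) * (?C * (ennreal (mX P1 n x) * indicator A x) + FF P1 n u x + ennreal (\<alpha>2 / \<alpha>1) * FF P2 n u x)"
    proof (cases "x \<in> A")
      case True
      then show ?thesis using x_mix_bound[OF u e, of n x] by (simp add: mult.commute)
    qed simp
  qed
  also have "\<dots> = (\<integral>\<^sup>+ x. ennreal (mX P1 n x) * indicator A x \<partial>count_space UNIV) + ennreal (1 / \<epsilon>) *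
       (?C * (\<integral>\<^sup>+ x. ennreal (mX P1 n x) * indicator A x \<partial>count_space UNIV)
        + (\<integral>\<^sup>+ x. FF P1 n u x \<partial>count_space UNIV) + ennreal (\<alpha>2 / \<alpha>1) * (\<integral>\<^sup>+ x. FF P2 n u x \<partial>count_space UNIV))"
    by (simp add: nn_integral_add nn_integral_cmult)
  also have "\<dots> \<le> (\<integral>\<^sup>+ x. ennreal (mX P1 n x) * indicator A x \<partial>count_space UNIV) + ennreal (1 / \<epsilon>) *
       (?C * (\<integral>\<^sup>+ x. ennreal (mX P1 n x) * indicator A x \<partial>count_space UNIV)
        + (ennreal (real n) * UIt P1 u + 2) + ennreal (\<alpha>2 / \<alpha>1) * (ennreal (real n) * UIt P2 u + 2))"
  proof (intro add_left_mono mult_left_mono add_mono FF_sum n)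
    show "0 < mY P n y" if "0 < mY P1 n y" for y using that a1 a2 by (simp add: mY_mix add_pos_nonneg)
    show "0 < mY P n y" if "0 < mY P2 n y" for y using that a1 a2 by (simp add: mY_mix add_pos_nonneg add.commute[of "\<alpha>1 * _"])
  qed auto
  finally show ?thesis .
qed

end

lemma ennreal_add_le: "ennreal (a + b) \<le> ennreal a + ennreal b"
proof (cases "0 \<le> a \<and> 0 \<le> b")
  case True then show ?thesis by (simp add: ennreal_plus)
next
  case False
  then show ?thesis
  proof (cases "0 \<le> a")
    case True
    then have "b < 0" using False by simp
    then have "ennreal (a + b) \<le> ennreal a" by (intro ennreal_leI) simp
    then show ?thesis by (simp add: add_increasing2)
  next
    case False
    then have "ennreal (a + b) \<le> ennreal b" by (intro ennreal_leI) simp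
    then show ?thesis by (simp add: add_increasing)
  qed
qed

lemma split_good:
  fixes wt :: "'x::countable \<Rightarrow> real"
  assumes good: "\<And>x. x \<in> G \<Longrightarrow> f x \<le> g x + K" and K: "0 \<le> K"
    and tot: "(\<integral>\<^sup>+ x. ennreal (wt x) \<partial>count_space UNIV) \<le> 1"
  shows "(\<integral>\<^sup>+ x. ennreal (wt x) * ennreal (f x) \<partial>count_space UNIV)
    \<le> (\<integral>\<^sup>+ x. ennreal (wt x) * ennreal (g x) \<partial>count_space UNIV) + ennreal K
      + (\<integral>\<^sup>+ x. ennreal (wt x) * indicator (- G) x * ennreal (f x) \<partial>count_space UNIV)"
proof -
  have "(\<integral>\<^sup>+ x. ennreal (wt x) * ennreal (f x) \<partial>count_space UNIV)
      \<le> (\<integral>\<^sup>+ x. ennreal (wt x) * ennreal (g x) + ennreal K * ennreal (wt x) + ennreal (wt x) * indicator (- G) x * ennreal (f x) \<partial>count_space UNIV)"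
  proof (intro nn_integral_mono)
    fix x
    show "ennreal (wt x) * ennreal (f x) \<le> ennreal (wt x) * ennreal (g x) + ennreal K * ennreal (wt x) + ennreal (wt x) * indicator (- G) x * ennreal (f x)"
    proof (cases "x \<in> G")
      case True
      have "ennreal (f x) \<le> ennreal (g x + K)" using good[OF True] by (rule ennreal_leI)
      also have "\<dots> \<le> ennreal (g x) + ennreal K" by (rule ennreal_add_le)
      finally have "ennreal (wt x) * ennreal (f x) \<le> ennreal (wt x) * (ennreal (g x) + ennreal K)" by (rule mult_left_mono) simp
      then show ?thesis using True by (simp add: distrib_left mult.commute)
    next
      case False then show ?thesis by (simp add: add_increasing)
    qed
  qed
  also have "\<dots> = (\<integral>\<^sup>+ x. ennreal (wt x) * ennreal (g x) \<partial>count_space UNIV) + ennreal K * (\<integral>\<^sup>+ x. ennreal (wt x) \<partial>count_space UNIV)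
      + (\<integral>\<^sup>+ x. ennreal (wt x) * indicator (- G) x * ennreal (f x) \<partial>count_space UNIV)"
    by (simp add: nn_integral_add nn_integral_cmult)
  also have "\<dots> \<le> (\<integral>\<^sup>+ x. ennreal (wt x) * ennreal (g x) \<partial>count_space UNIV) + ennreal K
      + (\<integral>\<^sup>+ x. ennreal (wt x) * indicator (- G) x * ennreal (f x) \<partial>count_space UNIV)"
    using mult_left_mono[OF tot, of "ennreal K"] by (intro add_mono) auto
  finally show ?thesis .
qed

lemma wsum_le1: "(\<integral>\<^sup>+ x. ennreal (pmf (p::'a::countable pmf) x) \<partial>count_space UNIV) \<le> 1"
  by (simp add: pmf_sum)

lemma mass_eq_prob:
  "(\<integral>\<^sup>+ x. ennreal (pmf p x) * indicator T x \<partial>count_space UNIV) = ennreal (measure_pmf.prob p T)"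
  by (simp add: nn_integral_count_space_indicator[symmetric] nn_integral_pmf measure_pmf.emeasure_eq_measure)

context mix begin

definition T1c :: "nat \<Rightarrow> real \<Rightarrow> 'a list set" where
  "T1c n \<gamma> = {x. (1 / real n) * log 2 (mX P1 n x / mX P2 n x) < \<gamma>}"

lemma T1_ok:
  assumes len: "length x = n" and n: "1 \<le> n" and x: "x \<notin> T1c n \<gamma>"
  shows "mX P2 n x \<le> 2 powr (- (real n * \<gamma>)) * mX P1 n x"
proof -
  have m1: "0 < mX P1 n x" using gs_mX_pos[OF gs1 len] .
  have m2: "0 < mX P2 n x" using gs_mX_pos[OF gs2 len] .
  have "\<gamma> \<le> (1 / real n) * log 2 (mX P1 n x / mX P2 n x)" using x unfolding T1c_def by simp
  then have "real n * \<gamma> \<le> log 2 (mX P1 n x / mX P2 n x)" using n by (simp add: field_simps)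
  then have "2 powr (real n * \<gamma>) \<le> mX P1 n x / mX P2 n x" using m1 m2 by (subst (asm) le_log_iff) auto
  then have "2 powr (real n * \<gamma>) * mX P2 n x \<le> mX P1 n x" using m2 by (simp add: field_simps)
  then show ?thesis by (simp add: powr_minus field_simps)
qed

lemma massB_sum:
  "(\<integral>\<^sup>+ x. (\<integral>\<^sup>+ y. ennreal (pmf (P1 n) (x,y)) * indicator {y. 2 powr c * mY P1 n y < mY P n y} y \<partial>count_space UNIV) \<partial>count_space UNIV)
    \<le> ennreal (2 powr (-c))"
proof -
  have "(\<integral>\<^sup>+ x. (\<integral>\<^sup>+ y. ennreal (pmf (P1 n) (x,y)) * indicator {y. 2 powr c * mY P1 n y < mY P n y} y \<partial>count_space UNIV) \<partial>count_space UNIV)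
    = (\<integral>\<^sup>+ y. ennreal (mY P1 n y) * indicator {y. 2 powr c * mY P1 n y < mY P n y} y \<partial>count_space UNIV)"
    by (rule swap_marg)
  also have "\<dots> \<le> (\<integral>\<^sup>+ y. ennreal (2 powr (-c)) * ennreal (mY P n y) \<partial>count_space UNIV)"
  proof (intro nn_integral_mono)
    fix y
    show "ennreal (mY P1 n y) * indicator {y. 2 powr c * mY P1 n y < mY P n y} y \<le> ennreal (2 powr (-c)) * ennreal (mY P n y)"
    proof (cases "2 powr c * mY P1 n y < mY P n y")
      case True
      then have "mY P1 n y \<le> 2 powr (-c) * mY P n y" by (simp add: powr_minus field_simps)
      then show ?thesis using True by (simp add: ennreal_mult[symmetric] ennreal_leI)
    qed simp
  qed
  also have "\<dots> = ennreal (2 powr (-c))" by (simp add: nn_integral_cmult pmf_sum)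
  finally show ?thesis .
qed

end

context mix begin

definition GU :: "nat \<Rightarrow> real \<Rightarrow> real \<Rightarrow> 'a list set" where
  "GU n \<epsilon> c = {x. length x = n \<and> \<alpha>2 * mX P2 n x \<le> \<epsilon> / 3 * mX P n x \<and>
     (\<integral>\<^sup>+ y. ennreal (pmf (P1 n) (x,y)) * indicator {y. 2 powr c * mY P1 n y < mY P n y} y \<partial>count_space UNIV) \<le> ennreal (\<epsilon> / 3 * mX P1 n x)}"

lemma delta_up:
  assumes n: "1 \<le> n" and e: "0 < \<epsilon>" and small: "\<alpha>2 * 2 powr (- (real n * \<gamma>)) \<le> \<epsilon> / 3 * \<alpha>1"
  shows "(\<integral>\<^sup>+ x. ennreal (mX P1 n x) * indicator (- GU n \<epsilon> c) x \<partial>count_space UNIV)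
     \<le> ennreal (measure_pmf.prob (map_pmf fst (P1 n)) (T1c n \<gamma>)) + ennreal (3 / \<epsilon>) * ennreal (2 powr (-c))"
proof -
  let ?SB = "\<lambda>x. (\<integral>\<^sup>+ y. ennreal (pmf (P1 n) (x,y)) * indicator {y. 2 powr c * mY P1 n y < mY P n y} y \<partial>count_space UNIV)"
  have "(\<integral>\<^sup>+ x. ennreal (mX P1 n x) * indicator (- GU n \<epsilon> c) x \<partial>count_space UNIV)
     \<le> (\<integral>\<^sup>+ x. ennreal (mX P1 n x) * indicator (T1c n \<gamma>) x + ennreal (3 / \<epsilon>) * ?SB x \<partial>count_space UNIV)"
  proof (intro nn_integral_mono)
    fix x
    show "ennreal (mX P1 n x) * indicator (- GU n \<epsilon> c) x \<le> ennreal (mX P1 n x) * indicator (T1c n \<gamma>) x + ennreal (3 / \<epsilon>) * ?SB x"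
    proof (cases "x \<in> GU n \<epsilon> c")
      case True then show ?thesis by simp
    next
      case notG: False
      show ?thesis
      proof (cases "length x = n")
        case False then show ?thesis using gs_mX_zero[OF gs1 False] by simp
      next
        case len: True
        show ?thesis
        proof (cases "x \<in> T1c n \<gamma>")
          case True then show ?thesis using notG by (simp add: add_increasing2)
        next
          case False
          have "\<alpha>2 * mX P2 n x \<le> \<alpha>2 * (2 powr (- (real n * \<gamma>)) * mX P1 n x)"
            using T1_ok[OF len n False] a2 by (intro mult_left_mono) auto
          also have "\<dots> = (\<alpha>2 * 2 powr (- (real n * \<gamma>))) * mX P1 n x" by simp
          also have "\<dots> \<le> (\<epsilon> / 3 * \<alpha>1) * mX P1 n x" using small by (intro mult_right_mono) auto
          also have "\<dots> \<le> \<epsilon> / 3 * mX P n x" using e a2 by (simp add: mX_mix field_simps)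
          finally have "\<alpha>2 * mX P2 n x \<le> \<epsilon> / 3 * mX P n x" .
          then have sb: "ennreal (\<epsilon> / 3 * mX P1 n x) < ?SB x" using notG len unfolding GU_def by auto
          have "ennreal (mX P1 n x) = ennreal (3 / \<epsilon>) * ennreal (\<epsilon> / 3 * mX P1 n x)"
            using e by (simp add: ennreal_mult[symmetric])
          also have "\<dots> \<le> ennreal (3 / \<epsilon>) * ?SB x" using sb by (intro mult_left_mono) auto
          finally show ?thesis using notG by (simp add: add_increasing)
        qed
      qed
    qed
  qed
  also have "\<dots> = ennreal (measure_pmf.prob (map_pmf fst (P1 n)) (T1c n \<gamma>)) + ennreal (3 / \<epsilon>) * (\<integral>\<^sup>+ x. ?SB x \<partial>count_space UNIV)"
    by (simp add: nn_integral_add nn_integral_cmult mass_eq_prob)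
  also have "\<dots> \<le> ennreal (measure_pmf.prob (map_pmf fst (P1 n)) (T1c n \<gamma>)) + ennreal (3 / \<epsilon>) * ennreal (2 powr (-c))"
    by (intro add_left_mono mult_left_mono massB_sum) simp
  finally show ?thesis .
qed

lemma up_n:
  assumes n: "1 \<le> n" and e: "0 < \<epsilon>" "\<epsilon> < 1" and u: "0 \<le> u" and c: "0 \<le> c"
  shows "(\<integral>\<^sup>+ x. ennreal (mX P1 n x) * ennreal (h_up P n \<epsilon> x) \<partial>count_space UNIV)
    \<le> (\<integral>\<^sup>+ x. ennreal (mX P1 n x) * ennreal (h_up P1 n (\<epsilon> / 3) x) \<partial>count_space UNIV) + ennreal (1 + (c + log 2 (1 / \<alpha>1)))
      + ((\<integral>\<^sup>+ x. ennreal (mX P1 n x) * indicator (- GU n \<epsilon> c) x \<partial>count_space UNIV) + ennreal (1 / \<epsilon>) *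
       (ennreal (2 * (real n * u) + log 2 (1 / \<alpha>1) + log 2 (1 / \<alpha>2)) * (\<integral>\<^sup>+ x. ennreal (mX P1 n x) * indicator (- GU n \<epsilon> c) x \<partial>count_space UNIV)
        + (ennreal (real n) * UIt P1 u + 2) + ennreal (\<alpha>2 / \<alpha>1) * (ennreal (real n) * UIt P2 u + 2)))"
proof -
  have "(\<integral>\<^sup>+ x. ennreal (mX P1 n x) * ennreal (h_up P n \<epsilon> x) \<partial>count_space UNIV)
    \<le> (\<integral>\<^sup>+ x. ennreal (mX P1 n x) * ennreal (h_up P1 n (\<epsilon> / 3) x) \<partial>count_space UNIV) + ennreal (1 + (c + log 2 (1 / \<alpha>1)))
      + (\<integral>\<^sup>+ x. ennreal (mX P1 n x) * indicator (- GU n \<epsilon> c) x * ennreal (h_up P n \<epsilon> x) \<partial>count_space UNIV)"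
  proof (rule split_good)
    show "h_up P n \<epsilon> x \<le> h_up P1 n (\<epsilon> / 3) x + (1 + (c + log 2 (1 / \<alpha>1)))" if "x \<in> GU n \<epsilon> c" for x
      using x_up[of x n \<epsilon> c] that e unfolding GU_def by simp
    show "0 \<le> 1 + (c + log 2 (1 / \<alpha>1))" using c L_nonneg by simp
  qed (rule wsum_le1)
  also have "(\<integral>\<^sup>+ x. ennreal (mX P1 n x) * indicator (- GU n \<epsilon> c) x * ennreal (h_up P n \<epsilon> x) \<partial>count_space UNIV)
     \<le> (\<integral>\<^sup>+ x. ennreal (mX P1 n x) * indicator (- GU n \<epsilon> c) x \<partial>count_space UNIV) + ennreal (1 / \<epsilon>) *
       (ennreal (2 * (real n * u) + log 2 (1 / \<alpha>1) + log 2 (1 / \<alpha>2)) * (\<integral>\<^sup>+ x. ennreal (mX P1 n x) * indicator (- GU n \<epsilon> c) x \<partial>count_space UNIV)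
        + (ennreal (real n) * UIt P1 u + 2) + ennreal (\<alpha>2 / \<alpha>1) * (ennreal (real n) * UIt P2 u + 2))"
    by (rule bad_mix[OF n u e])
  finally show ?thesis by (simp add: add.assoc)
qed

end

context mix begin

definition GL :: "nat \<Rightarrow> 'a list set" where
  "GL n = {x. length x = n \<and> mX P n x \<le> 2 * \<alpha>1 * mX P1 n x}"

lemma delta_lo:
  assumes n: "1 \<le> n" and small: "\<alpha>2 * 2 powr (- (real n * \<gamma>)) \<le> \<alpha>1"
  shows "(\<integral>\<^sup>+ x. ennreal (mX P1 n x) * indicator (- GL n) x \<partial>count_space UNIV)
     \<le> ennreal (measure_pmf.prob (map_pmf fst (P1 n)) (T1c n \<gamma>))"
proof -
  have "(\<integral>\<^sup>+ x. ennreal (mX P1 n x) * indicator (- GL n) x \<partial>count_space UNIV)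
     \<le> (\<integral>\<^sup>+ x. ennreal (mX P1 n x) * indicator (T1c n \<gamma>) x \<partial>count_space UNIV)"
  proof (intro nn_integral_mono)
    fix x
    show "ennreal (mX P1 n x) * indicator (- GL n) x \<le> ennreal (mX P1 n x) * indicator (T1c n \<gamma>) x"
    proof (cases "x \<in> GL n \<or> length x \<noteq> n \<or> x \<in> T1c n \<gamma>")
      case True
      then show ?thesis using gs_mX_zero[OF gs1, of x n] by (auto split: split_indicator)
    next
      case False
      then have len: "length x = n" and nT: "x \<notin> T1c n \<gamma>" and nG: "x \<notin> GL n" by auto
      have "\<alpha>2 * mX P2 n x \<le> \<alpha>2 * (2 powr (- (real n * \<gamma>)) * mX P1 n x)"
        using T1_ok[OF len n nT] a2 by (intro mult_left_mono) auto
      also have "\<dots> = (\<alpha>2 * 2 powr (- (real n * \<gamma>))) * mX P1 n x" by simp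
      also have "\<dots> \<le> \<alpha>1 * mX P1 n x" using small by (intro mult_right_mono) auto
      finally have "mX P n x \<le> 2 * \<alpha>1 * mX P1 n x" by (simp add: mX_mix)
      then show ?thesis using nG len unfolding GL_def by simp
    qed
  qed
  also have "\<dots> = ennreal (measure_pmf.prob (map_pmf fst (P1 n)) (T1c n \<gamma>))" by (rule mass_eq_prob)
  finally show ?thesis .
qed

lemma lo_n:
  assumes n: "1 \<le> n" and e: "0 < \<epsilon>" "\<epsilon> < 1" and u: "0 \<le> u" and c: "0 \<le> c" and cc: "2 powr (-c) \<le> \<epsilon> / 3"
  shows "(\<integral>\<^sup>+ x. ennreal (mX P1 n x) * ennreal (h_up P1 n \<epsilon> x) \<partial>count_space UNIV)
    \<le> (\<integral>\<^sup>+ x. ennreal (mX P1 n x) * ennreal (h_up P n (\<epsilon> / 3) x) \<partial>count_space UNIV) + ennreal (1 + (c + 1))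
      + ((\<integral>\<^sup>+ x. ennreal (mX P1 n x) * indicator (- GL n) x \<partial>count_space UNIV) + ennreal (1 / \<epsilon>) *
       (ennreal (real n * u) * (\<integral>\<^sup>+ x. ennreal (mX P1 n x) * indicator (- GL n) x \<partial>count_space UNIV) + ennreal (real n) * UIt P1 u))"
proof -
  have "(\<integral>\<^sup>+ x. ennreal (mX P1 n x) * ennreal (h_up P1 n \<epsilon> x) \<partial>count_space UNIV)
    \<le> (\<integral>\<^sup>+ x. ennreal (mX P1 n x) * ennreal (h_up P n (\<epsilon> / 3) x) \<partial>count_space UNIV) + ennreal (1 + (c + 1))
      + (\<integral>\<^sup>+ x. ennreal (mX P1 n x) * indicator (- GL n) x * ennreal (h_up P1 n \<epsilon> x) \<partial>count_space UNIV)"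
  proof (rule split_good)
    show "h_up P1 n \<epsilon> x \<le> h_up P n (\<epsilon> / 3) x + (1 + (c + 1))" if "x \<in> GL n" for x
      using x_lo[of x n \<epsilon> c] that e cc unfolding GL_def by simp
    show "0 \<le> 1 + (c + 1)" using c by simp
  qed (rule wsum_le1)
  also have "(\<integral>\<^sup>+ x. ennreal (mX P1 n x) * indicator (- GL n) x * ennreal (h_up P1 n \<epsilon> x) \<partial>count_space UNIV)
    \<le> (\<integral>\<^sup>+ x. ennreal (mX P1 n x) * indicator (- GL n) x \<partial>count_space UNIV) + ennreal (1 / \<epsilon>) *
       (ennreal (real n * u) * (\<integral>\<^sup>+ x. ennreal (mX P1 n x) * indicator (- GL n) x \<partial>count_space UNIV) + ennreal (real n) * UIt P1 u)"
    by (rule bad_self[OF gs1 e n u])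
  finally show ?thesis by (simp add: add.assoc)
qed

end

lemma err_collapse:
  fixes K d0 ie C nn d r :: real
  assumes nn: "0 \<le> K" "0 \<le> d0" "0 \<le> ie" "0 \<le> C" "0 \<le> nn" "0 \<le> d" "0 \<le> r"
    and b: "\<delta> \<le> ennreal d0" "U1 \<le> ennreal d" "U2 \<le> ennreal d"
  shows "ennreal K + (\<delta> + ennreal ie * (ennreal C * \<delta> + (ennreal nn * U1 + 2) + ennreal r * (ennreal nn * U2 + 2)))
    \<le> ennreal (K + (d0 + ie * (C * d0 + (nn * d + 2) + r * (nn * d + 2))))"
proof -
  have "ennreal K + (\<delta> + ennreal ie * (ennreal C * \<delta> + (ennreal nn * U1 + 2) + ennreal r * (ennreal nn * U2 + 2)))
    \<le> ennreal K + (ennreal d0 + ennreal ie * (ennreal C * ennreal d0 + (ennreal nn * ennreal d + 2) + ennreal r * (ennreal nn * ennreal d + 2)))"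
    using b by (intro add_mono mult_left_mono order_refl) auto
  also have "\<dots> = ennreal (K + (d0 + ie * (C * d0 + (nn * d + 2) + r * (nn * d + 2))))"
    using nn by (simp add: ennreal_plus ennreal_mult)
  finally show ?thesis .
qed

lemma err_collapse2:
  fixes K d0 ie C nn d :: real
  assumes nn: "0 \<le> K" "0 \<le> d0" "0 \<le> ie" "0 \<le> C" "0 \<le> nn" "0 \<le> d"
    and b: "\<delta> \<le> ennreal d0" "U1 \<le> ennreal d"
  shows "ennreal K + (\<delta> + ennreal ie * (ennreal C * \<delta> + ennreal nn * U1))
    \<le> ennreal (K + (d0 + ie * (C * d0 + nn * d)))"
proof -
  have "ennreal K + (\<delta> + ennreal ie * (ennreal C * \<delta> + ennreal nn * U1))
    \<le> ennreal K + (ennreal d0 + ennreal ie * (ennreal C * ennreal d0 + ennreal nn * ennreal d))"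
    using b by (intro add_mono mult_left_mono order_refl) auto
  also have "\<dots> = ennreal (K + (d0 + ie * (C * d0 + nn * d)))"
    using nn by (simp add: ennreal_plus ennreal_mult)
  finally show ?thesis .
qed

lemma ev_real_ge: "eventually (\<lambda>n. M \<le> real n) sequentially"
  using filterlim_real_sequentially unfolding filterlim_at_top by blast

lemma ev_pow_small:
  assumes g: "0 < \<gamma>" and t: "0 < t"
  shows "eventually (\<lambda>n. 2 powr (- (real n * \<gamma>)) \<le> t) sequentially"
  using ev_real_ge[of "- log 2 t / \<gamma>"]
proof (rule eventually_mono)
  fix n assume "- log 2 t / \<gamma> \<le> real n"
  then have "- (real n * \<gamma>) \<le> log 2 t" using g by (simp add: field_simps)
  then have "2 powr (- (real n * \<gamma>)) \<le> 2 powr (log 2 t)" by (intro powr_mono) auto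
  also have "\<dots> = t" using t by simp
  finally show "2 powr (- (real n * \<gamma>)) \<le> t" .
qed

lemma exists_c:
  fixes t :: real assumes t: "0 < t" shows "\<exists>c\<ge>0. 2 powr (- c) \<le> t"
proof -
  define c where "c = max 0 (- log 2 t)"
  have "2 powr (- c) \<le> 2 powr (log 2 t)" unfolding c_def by (intro powr_mono) auto
  also have "\<dots> = t" using t by simp
  finally show ?thesis unfolding c_def by (intro exI[of _ "max 0 (- log 2 t)"]) auto
qed

locale mixUI = mix +
  assumes ui1: "unif_integrable P1" and ui2: "unif_integrable P2"
    and sd: "spec_inf_div P1 P2 > 0"
begin

lemma gamma_ex: "\<exists>\<gamma>>0. (\<lambda>n. measure_pmf.prob (map_pmf fst (P1 n)) (T1c n \<gamma>)) \<longlonglongrightarrow> 0"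
proof -
  from sd obtain \<beta> where b: "(\<lambda>n. measure_pmf.prob (map_pmf fst (P1 n))
        {x. (1 / real n) * log 2 (pmf (map_pmf fst (P1 n)) x / pmf (map_pmf fst (P2 n)) x) < \<beta>}) \<longlonglongrightarrow> 0"
      and "0 < ereal \<beta>"
    unfolding spec_inf_div_def by (auto simp: less_Sup_iff)
  then show ?thesis unfolding T1c_def by (intro exI[of _ \<beta>]) auto
qed

lemma u_ex:
  assumes d: "0 < d"
  shows "\<exists>u\<ge>0. UIt P1 u \<le> ennreal d \<and> UIt P2 u \<le> ennreal d"
proof -
  have "eventually (\<lambda>u. UIt P1 u < ennreal d) at_top"
    using order_tendstoD(2)[OF UIt_tendsto[OF ui1]] d by simp
  moreover have "eventually (\<lambda>u. UIt P2 u < ennreal d) at_top"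
    using order_tendstoD(2)[OF UIt_tendsto[OF ui2]] d by simp
  moreover have "eventually (\<lambda>u::real. 0 \<le> u) at_top" by simp
  ultimately have "eventually (\<lambda>u. UIt P1 u < ennreal d \<and> UIt P2 u < ennreal d \<and> 0 \<le> u) at_top"
    by eventually_elim auto
  then obtain N :: real where "\<forall>u\<ge>N. UIt P1 u < ennreal d \<and> UIt P2 u < ennreal d \<and> 0 \<le> u"
    by (auto simp: eventually_at_top_linorder)
  then have "UIt P1 N < ennreal d \<and> UIt P2 N < ennreal d \<and> 0 \<le> N" by auto
  then obtain u where "UIt P1 u < ennreal d \<and> UIt P2 u < ennreal d \<and> 0 \<le> u" by blast
  then show ?thesis by (intro exI[of _ u]) auto
qed

end

context mixUI begin

lemma evt_up:
  assumes e: "0 < \<epsilon>" "\<epsilon> < 1" and eta: "0 < \<eta>"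
  shows "eventually (\<lambda>n. (\<integral>\<^sup>+ x. ennreal (mX P1 n x) * ennreal (h_up P n \<epsilon> x) \<partial>count_space UNIV)
    \<le> (\<integral>\<^sup>+ x. ennreal (mX P1 n x) * ennreal (h_up P1 n (\<epsilon> / 3) x) \<partial>count_space UNIV) + ennreal (real n * \<eta>)) sequentially"
proof -
  obtain \<gamma> where g: "0 < \<gamma>" and pr: "(\<lambda>n. measure_pmf.prob (map_pmf fst (P1 n)) (T1c n \<gamma>)) \<longlonglongrightarrow> 0"
    using gamma_ex by blast
  define r where "r = \<alpha>2 / \<alpha>1"
  have r0: "0 \<le> r" unfolding r_def using a1 a2 by simp
  define L where "L = log 2 (1 / \<alpha>1) + log 2 (1 / \<alpha>2)"
  have L0: "0 \<le> L" unfolding L_def using L_nonneg by simp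
  define d where "d = \<epsilon> * \<eta> / (4 * (1 + r))"
  have d0: "0 < d" unfolding d_def using e eta r0 by simp
  obtain u where u: "0 \<le> u" "UIt P1 u \<le> ennreal d" "UIt P2 u \<le> ennreal d" using u_ex[OF d0] by blast
  define dd where "dd = \<epsilon> * \<eta> / (8 * (u + 1))"
  have dd0: "0 < dd" unfolding dd_def using e eta u by simp
  obtain c where c: "0 \<le> c" "2 powr (-c) \<le> \<epsilon> * dd / 6" using exists_c[of "\<epsilon> * dd / 6"] e dd0 by auto
  define K where "K = 1 + (c + log 2 (1 / \<alpha>1))"
  have K0: "0 \<le> K" unfolding K_def using c L_nonneg by simp
  define Kc where "Kc = K + dd + (1 / \<epsilon>) * (L * dd + 2 + r * 2)"
  have ev1: "eventually (\<lambda>n. 1 \<le> n) sequentially" by simp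
  have ev2: "eventually (\<lambda>n. measure_pmf.prob (map_pmf fst (P1 n)) (T1c n \<gamma>) < dd / 2) sequentially"
    by (rule order_tendstoD(2)[OF pr]) (use dd0 in simp)
  have ev3: "eventually (\<lambda>n. 2 powr (- (real n * \<gamma>)) \<le> \<epsilon> * \<alpha>1 / (3 * \<alpha>2)) sequentially"
    by (rule ev_pow_small[OF g]) (use e a1 a2 in simp)
  have ev4: "eventually (\<lambda>n. 2 * Kc / \<eta> \<le> real n) sequentially" by (rule ev_real_ge)
  show ?thesis using ev1 ev2 ev3 ev4
  proof eventually_elim
    case (elim n)
    have n: "1 \<le> n" using elim by simp
    have small: "\<alpha>2 * 2 powr (- (real n * \<gamma>)) \<le> \<epsilon> / 3 * \<alpha>1"
    proof -
      have "\<alpha>2 * 2 powr (- (real n * \<gamma>)) \<le> \<alpha>2 * (\<epsilon> * \<alpha>1 / (3 * \<alpha>2))" using elim a2 by (intro mult_left_mono) auto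
      also have "\<dots> = \<epsilon> / 3 * \<alpha>1" using a2 by (simp add: field_simps)
      finally show ?thesis .
    qed
    let ?del = "(\<integral>\<^sup>+ x. ennreal (mX P1 n x) * indicator (- GU n \<epsilon> c) x \<partial>count_space UNIV)"
    have del: "?del \<le> ennreal dd"
    proof -
      have "?del \<le> ennreal (measure_pmf.prob (map_pmf fst (P1 n)) (T1c n \<gamma>)) + ennreal (3 / \<epsilon>) * ennreal (2 powr (-c))"
        by (rule delta_up[OF n e(1) small])
      also have "\<dots> = ennreal (measure_pmf.prob (map_pmf fst (P1 n)) (T1c n \<gamma>) + 3 / \<epsilon> * 2 powr (-c))"
      proof -
        have "ennreal (3 / \<epsilon>) * ennreal (2 powr (-c)) = ennreal (3 / \<epsilon> * 2 powr (-c))"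
          by (rule ennreal_mult[symmetric]) (use e in auto)
        moreover have "ennreal (measure_pmf.prob (map_pmf fst (P1 n)) (T1c n \<gamma>) + 3 / \<epsilon> * 2 powr (-c)) = ennreal (measure_pmf.prob (map_pmf fst (P1 n)) (T1c n \<gamma>)) + ennreal (3 / \<epsilon> * 2 powr (-c))"
          by (rule ennreal_plus) (use e in auto)
        ultimately show ?thesis by simp
      qed
      also have "\<dots> \<le> ennreal dd"
      proof (intro ennreal_leI)
        have "3 / \<epsilon> * 2 powr (-c) \<le> 3 / \<epsilon> * (\<epsilon> * dd / 6)" using c e by (intro mult_left_mono) auto
        also have "\<dots> = dd / 2" using e by (simp add: field_simps)
        finally show "measure_pmf.prob (map_pmf fst (P1 n)) (T1c n \<gamma>) + 3 / \<epsilon> * 2 powr (-c) \<le> dd" using elim by simp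
      qed
      finally show ?thesis .
    qed
    have "(\<integral>\<^sup>+ x. ennreal (mX P1 n x) * ennreal (h_up P n \<epsilon> x) \<partial>count_space UNIV)
      \<le> (\<integral>\<^sup>+ x. ennreal (mX P1 n x) * ennreal (h_up P1 n (\<epsilon> / 3) x) \<partial>count_space UNIV) + (ennreal K
      + (?del + ennreal (1 / \<epsilon>) * (ennreal (2 * (real n * u) + L) * ?del
        + (ennreal (real n) * UIt P1 u + 2) + ennreal r * (ennreal (real n) * UIt P2 u + 2))))"
      using up_n[OF n e u(1) c(1)] unfolding K_def L_def r_def by (simp add: add.assoc add_ac(1))
    also have "\<dots> \<le> (\<integral>\<^sup>+ x. ennreal (mX P1 n x) * ennreal (h_up P1 n (\<epsilon> / 3) x) \<partial>count_space UNIV)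
      + ennreal (K + (dd + (1 / \<epsilon>) * ((2 * (real n * u) + L) * dd + (real n * d + 2) + r * (real n * d + 2))))"
      by (intro add_left_mono err_collapse K0 del u(2,3) r0) (use e L0 u dd0 d0 in auto)
    also have "\<dots> \<le> (\<integral>\<^sup>+ x. ennreal (mX P1 n x) * ennreal (h_up P1 n (\<epsilon> / 3) x) \<partial>count_space UNIV) + ennreal (real n * \<eta>)"
    proof (intro add_left_mono ennreal_leI)
      have eq: "K + (dd + (1 / \<epsilon>) * ((2 * (real n * u) + L) * dd + (real n * d + 2) + r * (real n * d + 2)))
          = Kc + (1 / \<epsilon>) * (2 * (real n * u) * dd) + real n * (d * (1 + r) / \<epsilon>)"
        unfolding Kc_def using e by (simp add: field_simps)
      have t1: "(1 / \<epsilon>) * (2 * (real n * u) * dd) \<le> real n * \<eta> / 4"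
      proof -
        have "(1 / \<epsilon>) * (2 * (real n * u) * dd) = real n * \<eta> / 4 * (u / (u + 1))"
          unfolding dd_def using e u by (simp add: field_simps)
        also have "\<dots> \<le> real n * \<eta> / 4 * 1" using u eta by (intro mult_left_mono) auto
        finally show ?thesis by simp
      qed
      have t2: "real n * (d * (1 + r) / \<epsilon>) = real n * \<eta> / 4"
      proof -
        have "1 + r \<noteq> 0" using r0 by simp
        moreover have "4 + 4 * r \<noteq> 0" using r0 by simp
        ultimately have h: "d * (1 + r) = \<epsilon> * \<eta> / 4" unfolding d_def by (simp add: field_simps)
        have "real n * (d * (1 + r) / \<epsilon>) = real n * (\<epsilon> * \<eta> / 4 / \<epsilon>)" by (simp only: h)
        also have "\<dots> = real n * \<eta> / 4" using e by simp
        finally show ?thesis .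
      qed
      have t3: "Kc \<le> real n * \<eta> / 2" using elim eta by (simp add: field_simps)
      show "K + (dd + (1 / \<epsilon>) * ((2 * (real n * u) + L) * dd + (real n * d + 2) + r * (real n * d + 2))) \<le> real n * \<eta>"
      proof -
        have "Kc + 1 / \<epsilon> * (2 * (real n * u) * dd) + real n * (d * (1 + r) / \<epsilon>) \<le> real n * \<eta> / 2 + real n * \<eta> / 4 + real n * \<eta> / 4"
          using add_mono[OF add_mono[OF t3 t1] eq_refl[OF t2]] .
        also have "\<dots> = real n * \<eta>" by simp
        finally show ?thesis unfolding eq .
      qed
    qed
    finally show ?case .
  qed
qed

end

context mixUI begin

lemma evt_lo:
  assumes e: "0 < \<epsilon>" "\<epsilon> < 1" and eta: "0 < \<eta>"
  shows "eventually (\<lambda>n. (\<integral>\<^sup>+ x. ennreal (mX P1 n x) * ennreal (h_up P1 n \<epsilon> x) \<partial>count_space UNIV)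
    \<le> (\<integral>\<^sup>+ x. ennreal (mX P1 n x) * ennreal (h_up P n (\<epsilon> / 3) x) \<partial>count_space UNIV) + ennreal (real n * \<eta>)) sequentially"
proof -
  obtain \<gamma> where g: "0 < \<gamma>" and pr: "(\<lambda>n. measure_pmf.prob (map_pmf fst (P1 n)) (T1c n \<gamma>)) \<longlonglongrightarrow> 0"
    using gamma_ex by blast
  define d where "d = \<epsilon> * \<eta> / 4"
  have d0: "0 < d" unfolding d_def using e eta by simp
  obtain u where u: "0 \<le> u" "UIt P1 u \<le> ennreal d" using u_ex[OF d0] by blast
  define dd where "dd = \<epsilon> * \<eta> / (4 * (u + 1))"
  have dd0: "0 < dd" unfolding dd_def using e eta u by simp
  obtain c where c: "0 \<le> c" "2 powr (-c) \<le> \<epsilon> / 3" using exists_c[of "\<epsilon> / 3"] e by auto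
  define K where "K = 1 + (c + 1)"
  have K0: "0 \<le> K" unfolding K_def using c by simp
  define Kc where "Kc = K + dd"
  have ev1: "eventually (\<lambda>n. 1 \<le> n) sequentially" by simp
  have ev2: "eventually (\<lambda>n. measure_pmf.prob (map_pmf fst (P1 n)) (T1c n \<gamma>) < dd) sequentially"
    by (rule order_tendstoD(2)[OF pr]) (use dd0 in simp)
  have ev3: "eventually (\<lambda>n. 2 powr (- (real n * \<gamma>)) \<le> \<alpha>1 / \<alpha>2) sequentially"
    by (rule ev_pow_small[OF g]) (use a1 a2 in simp)
  have ev4: "eventually (\<lambda>n. 2 * Kc / \<eta> \<le> real n) sequentially" by (rule ev_real_ge)
  show ?thesis using ev1 ev2 ev3 ev4
  proof eventually_elim
    case (elim n)
    have n: "1 \<le> n" using elim by simp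
    have small: "\<alpha>2 * 2 powr (- (real n * \<gamma>)) \<le> \<alpha>1"
    proof -
      have "\<alpha>2 * 2 powr (- (real n * \<gamma>)) \<le> \<alpha>2 * (\<alpha>1 / \<alpha>2)" using elim a2 by (intro mult_left_mono) auto
      also have "\<dots> = \<alpha>1" using a2 by simp
      finally show ?thesis .
    qed
    let ?del = "(\<integral>\<^sup>+ x. ennreal (mX P1 n x) * indicator (- GL n) x \<partial>count_space UNIV)"
    have del: "?del \<le> ennreal dd"
    proof -
      have "?del \<le> ennreal (measure_pmf.prob (map_pmf fst (P1 n)) (T1c n \<gamma>))" by (rule delta_lo[OF n small])
      also have "\<dots> \<le> ennreal dd" using elim by (intro ennreal_leI) simp
      finally show ?thesis .
    qed
    have "(\<integral>\<^sup>+ x. ennreal (mX P1 n x) * ennreal (h_up P1 n \<epsilon> x) \<partial>count_space UNIV)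
      \<le> (\<integral>\<^sup>+ x. ennreal (mX P1 n x) * ennreal (h_up P n (\<epsilon> / 3) x) \<partial>count_space UNIV) + (ennreal K
      + (?del + ennreal (1 / \<epsilon>) * (ennreal (real n * u) * ?del + ennreal (real n) * UIt P1 u)))"
      using lo_n[OF n e u(1) c] unfolding K_def by (simp add: add.assoc)
    also have "\<dots> \<le> (\<integral>\<^sup>+ x. ennreal (mX P1 n x) * ennreal (h_up P n (\<epsilon> / 3) x) \<partial>count_space UNIV)
      + ennreal (K + (dd + (1 / \<epsilon>) * ((real n * u) * dd + real n * d)))"
      by (intro add_left_mono err_collapse2 K0 del u(2)) (use e u dd0 d0 in auto)
    also have "\<dots> \<le> (\<integral>\<^sup>+ x. ennreal (mX P1 n x) * ennreal (h_up P n (\<epsilon> / 3) x) \<partial>count_space UNIV) + ennreal (real n * \<eta>)"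
    proof (intro add_left_mono ennreal_leI)
      have eq: "K + (dd + (1 / \<epsilon>) * ((real n * u) * dd + real n * d)) = Kc + (1 / \<epsilon>) * ((real n * u) * dd) + real n * (d / \<epsilon>)"
        unfolding Kc_def using e by (simp add: field_simps)
      have t1: "(1 / \<epsilon>) * ((real n * u) * dd) \<le> real n * \<eta> / 4"
      proof -
        have "(1 / \<epsilon>) * ((real n * u) * dd) = real n * \<eta> / 4 * (u / (u + 1))"
          unfolding dd_def using e u by (simp add: field_simps)
        also have "\<dots> \<le> real n * \<eta> / 4 * 1" using u eta by (intro mult_left_mono) auto
        finally show ?thesis by simp
      qed
      have t2: "real n * (d / \<epsilon>) = real n * \<eta> / 4" unfolding d_def using e by simp
      have t3: "Kc \<le> real n * \<eta> / 2" using elim eta by (simp add: field_simps)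
      have "Kc + (1 / \<epsilon>) * ((real n * u) * dd) + real n * (d / \<epsilon>) \<le> real n * \<eta> / 2 + real n * \<eta> / 4 + real n * \<eta> / 4"
        using add_mono[OF add_mono[OF t3 t1] eq_refl[OF t2]] .
      also have "\<dots> = real n * \<eta>" by simp
      finally show "K + (dd + (1 / \<epsilon>) * ((real n * u) * dd + real n * d)) \<le> real n * \<eta>" unfolding eq .
    qed
    finally show ?case .
  qed
qed

end

lemma H_eq: "H_s_eps Q n \<epsilon> = (\<integral>\<^sup>+ x. ennreal (mX Q n x) * ennreal (h_up Q n \<epsilon> x) \<partial>count_space UNIV)"
  unfolding H_s_eps_def by (simp add: nn_integral_measure_pmf)

lemma H_anti:
  fixes Q :: "nat \<Rightarrow> ('a::countable list \<times> 'b::countable list) pmf"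
  assumes gs: "gen_source Q" and e: "0 < \<epsilon>" "\<epsilon> \<le> \<epsilon>'" "\<epsilon>' < 1"
  shows "H_s_eps Q n \<epsilon>' \<le> H_s_eps Q n \<epsilon>"
  unfolding H_eq
proof (intro nn_integral_mono)
  fix x
  show "ennreal (mX Q n x) * ennreal (h_up Q n \<epsilon>' x) \<le> ennreal (mX Q n x) * ennreal (h_up Q n \<epsilon> x)"
  proof (cases "length x = n")
    case False then show ?thesis using gs_mX_zero[OF gs False] by simp
  next
    case True
    have m: "0 < mX Q n x" using gs_mX_pos[OF gs True] .
    have "h_up Q n \<epsilon>' x \<le> h_up Q n \<epsilon> x"
      using h_up_eq[of Q n x \<epsilon>, OF m] h_up_eq[of Q n x \<epsilon>', OF m] e
        qt_mono[OF sc_nonneg _ m e, of "\<lambda>y. pmf (Q n) (x, y)"]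
      by (simp add: fst_marg)
    then show ?thesis by (intro mult_left_mono ennreal_leI) auto
  qed
qed

context mix begin

lemma Hmix: "H_s_eps P n \<epsilon> = ennreal \<alpha>1 * (\<integral>\<^sup>+ x. ennreal (mX P1 n x) * ennreal (h_up P n \<epsilon> x) \<partial>count_space UNIV)
    + ennreal \<alpha>2 * (\<integral>\<^sup>+ x. ennreal (mX P2 n x) * ennreal (h_up P n \<epsilon> x) \<partial>count_space UNIV)"
proof -
  have "H_s_eps P n \<epsilon> = (\<integral>\<^sup>+ x. ennreal \<alpha>1 * (ennreal (mX P1 n x) * ennreal (h_up P n \<epsilon> x)) + ennreal \<alpha>2 * (ennreal (mX P2 n x) * ennreal (h_up P n \<epsilon> x)) \<partial>count_space UNIV)"
    unfolding H_eq
  proof (intro nn_integral_cong)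
    fix x
    have "ennreal (mX P n x) = ennreal \<alpha>1 * ennreal (mX P1 n x) + ennreal \<alpha>2 * ennreal (mX P2 n x)"
      using a1 a2 by (simp add: mX_mix ennreal_plus ennreal_mult)
    then show "ennreal (mX P n x) * ennreal (h_up P n \<epsilon> x) = ennreal \<alpha>1 * (ennreal (mX P1 n x) * ennreal (h_up P n \<epsilon> x)) + ennreal \<alpha>2 * (ennreal (mX P2 n x) * ennreal (h_up P n \<epsilon> x))"
      by (simp add: distrib_right mult.assoc)
  qed
  also have "\<dots> = ennreal \<alpha>1 * (\<integral>\<^sup>+ x. ennreal (mX P1 n x) * ennreal (h_up P n \<epsilon> x) \<partial>count_space UNIV)
    + ennreal \<alpha>2 * (\<integral>\<^sup>+ x. ennreal (mX P2 n x) * ennreal (h_up P n \<epsilon> x) \<partial>count_space UNIV)"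
    by (simp add: nn_integral_add nn_integral_cmult)
  finally show ?thesis .
qed

end

lemma anti_lim:
  fixes f :: "real \<Rightarrow> ennreal"
  assumes anti: "\<And>e e'. 0 < e \<Longrightarrow> e \<le> e' \<Longrightarrow> e' < 1 \<Longrightarrow> f e' \<le> f e"
  shows "Lim (at_right 0) f = (SUP e\<in>{0<..<1}. f e)"
proof (rule tendsto_Lim)
  show "\<not> trivial_limit (at_right (0::real))" by simp
  show "(f \<longlongrightarrow> (SUP e\<in>{0<..<1}. f e)) (at_right 0)"
  proof (rule increasing_tendsto)
    show "eventually (\<lambda>n. f n \<le> (SUP e\<in>{0<..<1}. f e)) (at_right 0)"
      unfolding eventually_at_right_field by (intro exI[of _ 1]) (auto intro: SUP_upper)
    fix x assume "x < (SUP e\<in>{0<..<1}. f e)"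
    then obtain e0 where e0: "e0 \<in> {0<..<1}" "x < f e0" by (auto simp: less_SUP_iff)
    show "eventually (\<lambda>n. x < f n) (at_right 0)"
      unfolding eventually_at_right_field
    proof (intro exI[of _ e0] conjI allI impI)
      show "0 < e0" using e0 by simp
      fix y :: real assume "0 < y" "y < e0"
      then have "f e0 \<le> f y" using e0 by (intro anti) auto
      then show "x < f y" using e0 by simp
    qed
  qed
qed

lemma limsup_le_plus:
  fixes g h :: "nat \<Rightarrow> ennreal"
  assumes "\<And>\<eta>. 0 < \<eta> \<Longrightarrow> eventually (\<lambda>n. g n \<le> h n + ennreal \<eta>) sequentially"
  shows "limsup g \<le> limsup h"
proof (rule ennreal_le_epsilon)
  fix \<eta> :: real assume "0 < \<eta>"
  have "limsup g \<le> limsup (\<lambda>n. ennreal \<eta> + h n)"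
    using assms[OF \<open>0 < \<eta>\<close>] by (intro Limsup_mono) (simp add: add.commute)
  also have "\<dots> = ennreal \<eta> + limsup h" by (rule Limsup_const_add) simp
  finally show "limsup g \<le> limsup h + ennreal \<eta>" by (simp add: add.commute)
qed

theorem theorem11:
  fixes P1 P2 P :: "nat \<Rightarrow> ('a::countable list \<times> 'b::countable list) pmf"
    and \<alpha>1 \<alpha>2 :: real
  assumes "gen_source P1" and "gen_source P2"
    and "unif_integrable P1" and "unif_integrable P2"
    and "\<alpha>1 > 0" and "\<alpha>2 > 0" and "\<alpha>1 + \<alpha>2 = 1"
    and "\<And>n z. pmf (P n) z = \<alpha>1 * pmf (P1 n) z + \<alpha>2 * pmf (P2 n) z"
    and "spec_inf_div P1 P2 > 0" and "spec_inf_div P2 P1 > 0"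
  shows "H_s P = Lim (at_right 0) (\<lambda>\<epsilon>. limsup (\<lambda>n.
           ennreal (\<alpha>1 / real n) * H_s_eps P1 n \<epsilon> + ennreal (\<alpha>2 / real n) * H_s_eps P2 n \<epsilon>))"
proof -
  interpret A: mixUI P1 P2 P \<alpha>1 \<alpha>2
    by unfold_locales (use assms in auto)
  interpret B: mixUI P2 P1 P \<alpha>2 \<alpha>1
    by unfold_locales (use assms in \<open>auto simp: add.commute\<close>)
  define F where "F = (\<lambda>\<epsilon>. limsup (\<lambda>n. ennreal (1 / real n) * H_s_eps P n \<epsilon>))"
  define G where "G = (\<lambda>\<epsilon>. limsup (\<lambda>n. ennreal (\<alpha>1 / real n) * H_s_eps P1 n \<epsilon> + ennreal (\<alpha>2 / real n) * H_s_eps P2 n \<epsilon>))"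
  have a1: "0 < \<alpha>1" and a2: "0 < \<alpha>2" and a12: "\<alpha>1 + \<alpha>2 = 1" using assms by auto
  have scale: "ennreal (1 / real n) * (ennreal \<alpha>1 * X + ennreal \<alpha>2 * Y + ennreal (real n * \<eta>))
      = ennreal (\<alpha>1 / real n) * X + ennreal (\<alpha>2 / real n) * Y + ennreal \<eta>" if "1 \<le> n" "0 \<le> \<eta>" for n X Y \<eta>
  proof -
    have "ennreal (1 / real n) * ennreal \<alpha>1 = ennreal (\<alpha>1 / real n)" using a1 by (simp add: ennreal_mult[symmetric])
    moreover have "ennreal (1 / real n) * ennreal \<alpha>2 = ennreal (\<alpha>2 / real n)" using a2 by (simp add: ennreal_mult[symmetric])
    moreover have "ennreal (1 / real n) * ennreal (real n * \<eta>) = ennreal \<eta>" using that by (simp add: ennreal_mult[symmetric])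
    ultimately show ?thesis by (simp add: distrib_left mult.assoc[symmetric])
  qed
  have split_eta: "ennreal \<alpha>1 * (X + ennreal e) + ennreal \<alpha>2 * (Y + ennreal e) = ennreal \<alpha>1 * X + ennreal \<alpha>2 * Y + ennreal e" if "0 \<le> e" for X Y e
  proof -
    have "ennreal \<alpha>1 * ennreal e + ennreal \<alpha>2 * ennreal e = ennreal e"
      using a1 a2 a12 that by (simp add: ennreal_mult[symmetric] ennreal_plus[symmetric] distrib_right[symmetric] del: ennreal_plus)
    then show ?thesis by (simp add: distrib_left add_ac)
  qed
  have FG: "F \<epsilon> \<le> G (\<epsilon> / 3)" if e: "0 < \<epsilon>" "\<epsilon> < 1" for \<epsilon>
    unfolding F_def G_def
  proof (rule limsup_le_plus)
    fix \<eta> :: real assume eta: "0 < \<eta>"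
    show "eventually (\<lambda>n. ennreal (1 / real n) * H_s_eps P n \<epsilon> \<le> ennreal (\<alpha>1 / real n) * H_s_eps P1 n (\<epsilon> / 3) + ennreal (\<alpha>2 / real n) * H_s_eps P2 n (\<epsilon> / 3) + ennreal \<eta>) sequentially"
      using A.evt_up[OF e eta] B.evt_up[OF e eta] eventually_ge_at_top[of 1]
    proof eventually_elim
      case (elim n)
      have "H_s_eps P n \<epsilon> \<le> ennreal \<alpha>1 * (H_s_eps P1 n (\<epsilon> / 3) + ennreal (real n * \<eta>)) + ennreal \<alpha>2 * (H_s_eps P2 n (\<epsilon> / 3) + ennreal (real n * \<eta>))"
        unfolding A.Hmix H_eq[of P1] H_eq[of P2] using elim by (intro add_mono mult_left_mono) auto
      also have "\<dots> = ennreal \<alpha>1 * H_s_eps P1 n (\<epsilon> / 3) + ennreal \<alpha>2 * H_s_eps P2 n (\<epsilon> / 3) + ennreal (real n * \<eta>)"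
        using eta by (intro split_eta) simp
      finally have "ennreal (1 / real n) * H_s_eps P n \<epsilon> \<le> ennreal (1 / real n) * (ennreal \<alpha>1 * H_s_eps P1 n (\<epsilon> / 3) + ennreal \<alpha>2 * H_s_eps P2 n (\<epsilon> / 3) + ennreal (real n * \<eta>))"
        by (rule mult_left_mono) simp
      also have "\<dots> = ennreal (\<alpha>1 / real n) * H_s_eps P1 n (\<epsilon> / 3) + ennreal (\<alpha>2 / real n) * H_s_eps P2 n (\<epsilon> / 3) + ennreal \<eta>"
        using elim eta by (intro scale) auto
      finally show ?case .
    qed
  qed
  have GF: "G \<epsilon> \<le> F (\<epsilon> / 3)" if e: "0 < \<epsilon>" "\<epsilon> < 1" for \<epsilon>
    unfolding F_def G_def
  proof (rule limsup_le_plus)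
    fix \<eta> :: real assume eta: "0 < \<eta>"
    show "eventually (\<lambda>n. ennreal (\<alpha>1 / real n) * H_s_eps P1 n \<epsilon> + ennreal (\<alpha>2 / real n) * H_s_eps P2 n \<epsilon> \<le> ennreal (1 / real n) * H_s_eps P n (\<epsilon> / 3) + ennreal \<eta>) sequentially"
      using A.evt_lo[OF e eta] B.evt_lo[OF e eta] eventually_ge_at_top[of 1]
    proof eventually_elim
      case (elim n)
      have n1: "1 \<le> n" using elim by simp
      have "ennreal \<alpha>1 * H_s_eps P1 n \<epsilon> + ennreal \<alpha>2 * H_s_eps P2 n \<epsilon>
          \<le> ennreal \<alpha>1 * ((\<integral>\<^sup>+ x. ennreal (mX P1 n x) * ennreal (h_up P n (\<epsilon> / 3) x) \<partial>count_space UNIV) + ennreal (real n * \<eta>))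
           + ennreal \<alpha>2 * ((\<integral>\<^sup>+ x. ennreal (mX P2 n x) * ennreal (h_up P n (\<epsilon> / 3) x) \<partial>count_space UNIV) + ennreal (real n * \<eta>))"
        unfolding H_eq[of P1] H_eq[of P2] using elim by (intro add_mono mult_left_mono) auto
      also have "\<dots> = H_s_eps P n (\<epsilon> / 3) + ennreal (real n * \<eta>)"
        unfolding A.Hmix using eta by (intro split_eta) simp
      finally have le: "ennreal (1 / real n) * (ennreal \<alpha>1 * H_s_eps P1 n \<epsilon> + ennreal \<alpha>2 * H_s_eps P2 n \<epsilon>) \<le> ennreal (1 / real n) * (H_s_eps P n (\<epsilon> / 3) + ennreal (real n * \<eta>))"
        by (rule mult_left_mono) simp
      have eq1: "ennreal (1 / real n) * (ennreal \<alpha>1 * H_s_eps P1 n \<epsilon> + ennreal \<alpha>2 * H_s_eps P2 n \<epsilon>) = ennreal (\<alpha>1 / real n) * H_s_eps P1 n \<epsilon> + ennreal (\<alpha>2 / real n) * H_s_eps P2 n \<epsilon>"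
      proof -
        have "ennreal (1 / real n) * ennreal \<alpha>1 = ennreal (\<alpha>1 / real n)" using a1 by (simp add: ennreal_mult[symmetric])
        moreover have "ennreal (1 / real n) * ennreal \<alpha>2 = ennreal (\<alpha>2 / real n)" using a2 by (simp add: ennreal_mult[symmetric])
        ultimately show ?thesis by (simp add: distrib_left mult.assoc[symmetric])
      qed
      have eq2: "ennreal (1 / real n) * (H_s_eps P n (\<epsilon> / 3) + ennreal (real n * \<eta>)) = ennreal (1 / real n) * H_s_eps P n (\<epsilon> / 3) + ennreal \<eta>"
      proof -
        have "ennreal (1 / real n) * ennreal (real n * \<eta>) = ennreal \<eta>" using n1 eta by (simp add: ennreal_mult[symmetric])
        then show ?thesis by (simp add: distrib_left)
      qed
      show ?case using le unfolding eq1 eq2 .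
    qed
  qed
  have Fanti: "F e' \<le> F e" if "0 < e" "e \<le> e'" "e' < 1" for e e'
    unfolding F_def using H_anti[OF A.gs that] by (intro Limsup_mono always_eventually allI mult_left_mono) auto
  have Ganti: "G e' \<le> G e" if "0 < e" "e \<le> e'" "e' < 1" for e e'
    unfolding G_def using H_anti[OF assms(1) that] H_anti[OF assms(2) that]
    by (intro Limsup_mono always_eventually allI add_mono mult_left_mono) auto
  have "(SUP e\<in>{0<..<1}. F e) \<le> (SUP e\<in>{0<..<1}. G e)"
  proof (rule SUP_least)
    fix e :: real assume "e \<in> {0<..<1}"
    then have "F e \<le> G (e / 3)" "e / 3 \<in> {0<..<1}" using FG by auto
    then show "F e \<le> (SUP e\<in>{0<..<1}. G e)" by (meson SUP_upper order_trans)
  qed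
  moreover have "(SUP e\<in>{0<..<1}. G e) \<le> (SUP e\<in>{0<..<1}. F e)"
  proof (rule SUP_least)
    fix e :: real assume "e \<in> {0<..<1}"
    then have "G e \<le> F (e / 3)" "e / 3 \<in> {0<..<1}" using GF by auto
    then show "G e \<le> (SUP e\<in>{0<..<1}. F e)" by (meson SUP_upper order_trans)
  qed
  ultimately have "Lim (at_right 0) F = Lim (at_right 0) G"
    using anti_lim[of F, OF Fanti] anti_lim[of G, OF Ganti] by simp
  then show ?thesis unfolding H_s_def F_def G_def .
qed
end
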